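(* Let $\varepsilon,\delta\geq 0$ and let $\mathcal{M},\mathcal{N}$ be CTMCs with $\mathcal{M}\sim_{\varepsilon,\delta}\mathcal{N}$. Then there are CTMCs $\mathcal{M}'$ and $\mathcal{N}'$ with the same graph structure such that $\mathcal{M}\sim_{\varepsilon,0}\mathcal{M}'$, $\mathcal{M}'\sim_{0,\delta}\mathcal{N}'$, and $\mathcal{N}'\sim\mathcal{N}$.
   Context: A CTMC is a tuple $(S,P,E,s_{init},L)$ with $S$ a finite nonempty set of states, $P\colon S\to\mathrm{Distr}(S)$ a transition probability function (self-loops allowed; $P(s,A)=\sum_{a\in A}P(s,a)$), $E\colon S\to\mathbb{R}_{>0}$ an exit rate function, $s_{init}\in S$ an initial state and $L\colon S\to 2^{AP}$ a labeling. Two CTMCs have the same graph structure if they have the same state set, initial state, labeling, and the same pairs of states connected by transitions of positive probability. For a relation $R\subseteq S\times S$ and $A\subseteq S$, $R(A)=\{t\mid\exists s\in A:(s,t)\in R\}$. For $\varepsilon,\delta\geq0$, a reflexive symmetric relation $R$ on the states of a CTMC is an $(\varepsilon,\delta)$-bisimulation if for all $(s,s')\in R$: $L(s)=L(s')$, $|\ln E(s)-\ln E(s')|\leq\delta$, and $P(s,A)\leq P(s',R(A))+\varepsilon$ for all sets of states $A$; $s\sim_{\varepsilon,\delta}s'$ if some $(\varepsilon,\delta)$-bisimulation contains $(s,s')$. A strong bisimulation is an equivalence $R$ with $L(s)=L(s')$, $E(s)=E(s')$ and $P(s,C)=P(s',C)$ for every equivalence class $C$ whenever $(s,s')\in R$;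 $s\sim s'$ if some strong bisimulation contains $(s,s')$. For CTMCs $\mathcal{M}_1,\mathcal{M}_2$, the direct sum $\mathcal{M}_1\oplus\mathcal{M}_2$ is their disjoint union; $\mathcal{M}_1\sim_{\varepsilon,\delta}\mathcal{M}_2$ (resp. $\mathcal{M}_1\sim\mathcal{M}_2$) means that the initial states of $\mathcal{M}_1$ and $\mathcal{M}_2$ satisfy $\sim_{\varepsilon,\delta}$ (resp. $\sim$) in $\mathcal{M}_1\oplus\mathcal{M}_2$. *)

theory Defs
  imports Complex_Main
begin

text \<open>A CTMC (S, P, E, s_init, L). Transition probabilities are given as a
  function P s t, with P(s, A) = sum of P s t over t in A.\<close>

record ('s, 'ap) ctmc =
  states :: "'s set"
  prob :: "'s \<Rightarrow> 's \<Rightarrow> real"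
  rate :: "'s \<Rightarrow> real"
  initial :: "'s"
  label :: "'s \<Rightarrow> 'ap set"

definition is_ctmc :: "('s, 'ap) ctmc \<Rightarrow> bool" where
  "is_ctmc M \<longleftrightarrow>
     finite (states M) \<and> states M \<noteq> {} \<and>
     initial M \<in> states M \<and>
     (\<forall>s\<in>states M. (\<forall>t. prob M s t \<ge> 0) \<and> (\<forall>t. t \<notin> states M \<longrightarrow> prob M s t = 0)
                    \<and> (\<Sum>t\<in>states M. prob M s t) = 1) \<and>
     (\<forall>s\<in>states M. rate M s > 0)"

definition probset :: "('s, 'ap) ctmc \<Rightarrow> 's \<Rightarrow> 's set \<Rightarrow> real" where
  "probset M s A = (\<Sum>t\<in>A \<inter> states M. prob M s t)"

definition same_graph :: "('s, 'ap) ctmc \<Rightarrow> ('s, 'ap) ctmc \<Rightarrow> bool" where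
  "same_graph M N \<longleftrightarrow>
     states M = states N \<and> initial M = initial N \<and>
     (\<forall>s\<in>states M. label M s = label N s) \<and>
     (\<forall>s\<in>states M. \<forall>t\<in>states M. prob M s t > 0 \<longleftrightarrow> prob N s t > 0)"

definition eps_delta_bisim :: "real \<Rightarrow> real \<Rightarrow> ('s, 'ap) ctmc \<Rightarrow> ('s \<times> 's) set \<Rightarrow> bool" where
  "eps_delta_bisim \<epsilon> \<delta> M R \<longleftrightarrow>
     R \<subseteq> states M \<times> states M \<and> refl_on (states M) R \<and> sym R \<and>
     (\<forall>(s, s')\<in>R. label M s = label M s' \<and>
        \<bar>ln (rate M s) - ln (rate M s')\<bar> \<le> \<delta> \<and>
        (\<forall>A\<subseteq>states M. probset M s A \<le> probset M s' (R `` A) + \<epsilon>))"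

definition eps_delta_bisimilar :: "real \<Rightarrow> real \<Rightarrow> ('s, 'ap) ctmc \<Rightarrow> 's \<Rightarrow> 's \<Rightarrow> bool" where
  "eps_delta_bisimilar \<epsilon> \<delta> M s s' \<longleftrightarrow> (\<exists>R. eps_delta_bisim \<epsilon> \<delta> M R \<and> (s, s') \<in> R)"

definition strong_bisim :: "('s, 'ap) ctmc \<Rightarrow> ('s \<times> 's) set \<Rightarrow> bool" where
  "strong_bisim M R \<longleftrightarrow>
     equiv (states M) R \<and>
     (\<forall>(s, s')\<in>R. label M s = label M s' \<and> rate M s = rate M s' \<and>
        (\<forall>C\<in>states M // R. probset M s C = probset M s' C))"

definition strong_bisimilar :: "('s, 'ap) ctmc \<Rightarrow> 's \<Rightarrow> 's \<Rightarrow> bool" where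
  "strong_bisimilar M s s' \<longleftrightarrow> (\<exists>R. strong_bisim M R \<and> (s, s') \<in> R)"

text \<open>Direct sum (disjoint union); its initial state is irrelevant for the
  notions below, we take the initial state of the left summand.\<close>

definition direct_sum :: "('s, 'ap) ctmc \<Rightarrow> ('t, 'ap) ctmc \<Rightarrow> ('s + 't, 'ap) ctmc" where
  "direct_sum M N = \<lparr>
     states = Inl ` states M \<union> Inr ` states N,
     prob = (\<lambda>x y. case (x, y) of
                (Inl s, Inl s') \<Rightarrow> prob M s s'
              | (Inr t, Inr t') \<Rightarrow> prob N t t'
              | _ \<Rightarrow> 0),
     rate = case_sum (rate M) (rate N),
     initial = Inl (initial M),
     label = case_sum (label M) (label N) \<rparr>"

definition ctmc_eps_delta_bisimilar :: "real \<Rightarrow> real \<Rightarrow> ('s, 'ap) ctmc \<Rightarrow> ('t, 'ap) ctmc \<Rightarrow> bool" where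
  "ctmc_eps_delta_bisimilar \<epsilon> \<delta> M N \<longleftrightarrow>
     eps_delta_bisimilar \<epsilon> \<delta> (direct_sum M N) (Inl (initial M)) (Inr (initial N))"

definition ctmc_strong_bisimilar :: "('s, 'ap) ctmc \<Rightarrow> ('t, 'ap) ctmc \<Rightarrow> bool" where
  "ctmc_strong_bisimilar M N \<longleftrightarrow>
     strong_bisimilar (direct_sum M N) (Inl (initial M)) (Inr (initial N))"

end

theory Submission
  imports Defs
begin


definition hall :: "('x \<Rightarrow> 'y \<Rightarrow> bool) \<Rightarrow> 'x set \<Rightarrow> 'y set \<Rightarrow> ('x \<Rightarrow> real) \<Rightarrow> ('y \<Rightarrow> real) \<Rightarrow> bool" where
  "hall Rl X Y p q \<longleftrightarrow> (\<forall>A\<subseteq>Y. sum q A \<le> sum p {x\<in>X. \<exists>y\<in>A. Rl x y})"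

definition isflow :: "('x \<Rightarrow> 'y \<Rightarrow> bool) \<Rightarrow> 'x set \<Rightarrow> 'y set \<Rightarrow> ('x \<Rightarrow> real) \<Rightarrow> ('y \<Rightarrow> real) \<Rightarrow> ('x \<Rightarrow> 'y \<Rightarrow> real) \<Rightarrow> bool" where
  "isflow Rl X Y p q f \<longleftrightarrow> (\<forall>x y. 0 \<le> f x y) \<and> (\<forall>x y. f x y \<noteq> 0 \<longrightarrow> x \<in> X \<and> y \<in> Y \<and> Rl x y)
     \<and> (\<forall>x\<in>X. sum (f x) Y \<le> p x) \<and> (\<forall>y\<in>Y. (\<Sum>x\<in>X. f x y) = q y)"

lemma flow_zero_y:
  assumes "finite X" "finite Y" "y0 \<in> Y" "q y0 = 0" "isflow Rl X (Y - {y0}) p q f"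
  shows "isflow Rl X Y p q f"
proof -
  have z: "f x y0 = 0" for x using assms(5) unfolding isflow_def by blast
  have "sum (f x) Y = sum (f x) (Y - {y0})" for x
    using assms(1-3) z by (simp add: sum_diff1)
  then show ?thesis using assms z unfolding isflow_def by auto
qed

lemma flow_zero_x:
  assumes "finite X" "finite Y" "x0 \<in> X" "p x0 \<ge> 0" "isflow Rl (X - {x0}) Y p q f"
  shows "isflow Rl X Y p q f"
proof -
  have z: "f x0 y = 0" for y using assms(5) unfolding isflow_def by blast
  have "(\<Sum>x\<in>X. f x y) = (\<Sum>x\<in>X - {x0}. f x y)" for y
    using assms(1-3) z by (simp add: sum_diff1)
  then show ?thesis using assms z unfolding isflow_def by auto
qed

lemma hall_zero_x:
  assumes "finite X" "p x0 = 0" "hall Rl X Y p q"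
  shows "hall Rl (X - {x0}) Y p q"
  unfolding hall_def
proof (intro allI impI)
  fix A assume "A \<subseteq> Y"
  have "sum p {x\<in>X - {x0}. \<exists>y\<in>A. Rl x y} = sum p {x\<in>X. \<exists>y\<in>A. Rl x y}"
    by (rule sum.mono_neutral_left) (use assms in auto)
  then show "sum q A \<le> sum p {x\<in>X - {x0}. \<exists>y\<in>A. Rl x y}"
    using assms(3) \<open>A \<subseteq> Y\<close> unfolding hall_def by auto
qed

lemma flow_combine:
  assumes "finite X" "finite Y" "A \<subseteq> Y"
    and f1: "isflow Rl {x\<in>X. \<exists>y\<in>A. Rl x y} A p q f1"
    and f2: "isflow Rl (X - {x\<in>X. \<exists>y\<in>A. Rl x y}) (Y - A) p q f2"
  shows "isflow Rl X Y p q (\<lambda>x y. f1 x y + f2 x y)"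
proof -
  let ?N = "{x\<in>X. \<exists>y\<in>A. Rl x y}"
  have s1: "f1 x y \<noteq> 0 \<Longrightarrow> x \<in> ?N \<and> y \<in> A \<and> Rl x y" for x y using f1 unfolding isflow_def by blast
  have s2: "f2 x y \<noteq> 0 \<Longrightarrow> x \<in> X - ?N \<and> y \<in> Y - A \<and> Rl x y" for x y using f2 unfolding isflow_def by blast
  have fA: "finite A" using assms(2,3) finite_subset by blast
  have Ysplit: "Y = A \<union> (Y - A)" using assms(3) by blast
  have Xsplit: "X = ?N \<union> (X - ?N)" by blast
  have fN: "finite ?N" using assms(1) by simp
  have row: "sum (\<lambda>y. f1 x y + f2 x y) Y \<le> p x" if "x \<in> X" for x
  proof (cases "x \<in> ?N")
    case True
    then have "f2 x y = 0" for y using s2 by blast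
    moreover have "sum (f1 x) Y = sum (f1 x) A"
      by (rule sum.mono_neutral_right) (use assms s1 in auto)
    ultimately show ?thesis using f1 True unfolding isflow_def by simp
  next
    case False
    then have "f1 x y = 0" for y using s1 by blast
    moreover have "sum (f2 x) Y = sum (f2 x) (Y - A)"
      by (rule sum.mono_neutral_right) (use assms s2 in auto)
    ultimately show ?thesis using f2 False that unfolding isflow_def by simp
  qed
  have col: "(\<Sum>x\<in>X. f1 x y + f2 x y) = q y" if "y \<in> Y" for y
  proof (cases "y \<in> A")
    case True
    then have "f2 x y = 0" for x using s2 by blast
    moreover have "(\<Sum>x\<in>X. f1 x y) = (\<Sum>x\<in>?N. f1 x y)"
      by (rule sum.mono_neutral_right) (use assms s1 in auto)
    ultimately show ?thesis using f1 True unfolding isflow_def by simp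
  next
    case False
    then have "f1 x y = 0" for x using s1 by blast
    moreover have "(\<Sum>x\<in>X. f2 x y) = (\<Sum>x\<in>X - ?N. f2 x y)"
      by (rule sum.mono_neutral_right) (use assms s2 in auto)
    ultimately show ?thesis using f2 False that unfolding isflow_def by simp
  qed
  show ?thesis unfolding isflow_def
  proof (intro conjI)
    show "\<forall>x y. 0 \<le> f1 x y + f2 x y" using f1 f2 unfolding isflow_def by (simp add: add_nonneg_nonneg)
    show "\<forall>x y. f1 x y + f2 x y \<noteq> 0 \<longrightarrow> x \<in> X \<and> y \<in> Y \<and> Rl x y"
    proof (intro allI impI)
      fix x y assume h: "f1 x y + f2 x y \<noteq> 0"
      show "x \<in> X \<and> y \<in> Y \<and> Rl x y"
      proof (cases "f1 x y = 0")
        case True then show ?thesis using h s2[of x y] by auto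
      next
        case False then show ?thesis using s1[of x y] assms(3) by auto
      qed
    qed
  qed (use row col in auto)
qed

lemma sum_upd_sub:
  assumes "finite S"
  fixes g :: "'a \<Rightarrow> real"
  shows "sum (g(a := g a - t)) S = sum g S - (if a \<in> S then t else 0)"
proof (cases "a \<in> S")
  case True
  have "sum (g(a := g a - t)) S = (g a - t) + sum (g(a := g a - t)) (S - {a})"
    using True assms by (simp add: sum.remove)
  also have "sum (g(a := g a - t)) (S - {a}) = sum g (S - {a})"
    by (rule sum.cong) auto
  also have "sum g S = g a + sum g (S - {a})" using True assms by (simp add: sum.remove)
  ultimately show ?thesis using True by (simp add: algebra_simps)
next
  case False
  then have "sum (g(a := g a - t)) S = sum g S" by (intro sum.cong) auto
  then show ?thesis using False by simp
qed

lemma flow_exists: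
  assumes "finite X" "finite Y" "\<forall>x\<in>X. 0 \<le> p x" "\<forall>y\<in>Y. 0 \<le> q y" "hall Rl X Y p q"
  shows "\<exists>f. isflow Rl X Y p q f"
  using assms
proof (induction "card X + card Y" arbitrary: X Y p q rule: less_induct)
  case less
  have zero_y: "\<exists>f. isflow Rl X Y p' q' f"
    if ps: "\<forall>x\<in>X. 0 \<le> p' x" "\<forall>y\<in>Y. 0 \<le> q' y" "hall Rl X Y p' q'" "y0 \<in> Y" "q' y0 = 0" for p' q' y0
  proof -
    have "card (Y - {y0}) < card Y" using ps(4) less.prems(2) by (rule card_Diff1_less[rotated])
    hence c: "card X + card (Y - {y0}) < card X + card Y" by simp
    have h: "hall Rl X (Y - {y0}) p' q'" using ps(3) unfolding hall_def by (meson Diff_subset order_trans)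
    have fY: "finite (Y - {y0})" using less.prems(2) by simp
    have nq: "\<forall>y\<in>Y - {y0}. 0 \<le> q' y" using ps(2) by simp
    have "\<exists>f. isflow Rl X (Y - {y0}) p' q' f"
      using less.hyps[OF c less.prems(1) fY ps(1) nq h] .
    then obtain f where "isflow Rl X (Y - {y0}) p' q' f" by blast
    then show ?thesis using flow_zero_y[of X Y y0 q' Rl p'] less.prems(1,2) ps(4,5) by blast
  qed
  have zero_x: "\<exists>f. isflow Rl X Y p' q' f"
    if ps: "\<forall>x\<in>X. 0 \<le> p' x" "\<forall>y\<in>Y. 0 \<le> q' y" "hall Rl X Y p' q'" "x0 \<in> X" "p' x0 = 0" for p' q' x0
  proof -
    have "card (X - {x0}) < card X" using ps(4) less.prems(1) by (rule card_Diff1_less[rotated])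
    hence c: "card (X - {x0}) + card Y < card X + card Y" by simp
    have h: "hall Rl (X - {x0}) Y p' q'" using hall_zero_x[OF less.prems(1) ps(5,3)] .
    have fX: "finite (X - {x0})" using less.prems(1) by simp
    have np: "\<forall>x\<in>X - {x0}. 0 \<le> p' x" using ps(1) by simp
    have "\<exists>f. isflow Rl (X - {x0}) Y p' q' f"
      using less.hyps[OF c fX less.prems(2) np ps(2) h] .
    then obtain f where "isflow Rl (X - {x0}) Y p' q' f" by blast
    then show ?thesis using flow_zero_x[of X Y x0 p' Rl q'] less.prems(1,2) ps(1,4) by blast
  qed
  have tight: "\<exists>f. isflow Rl X Y p' q' f"
    if nn: "\<forall>x\<in>X. 0 \<le> p' x" "\<forall>y\<in>Y. 0 \<le> q' y" and hl: "hall Rl X Y p' q'"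
      and A: "A \<noteq> {}" "A \<subseteq> Y" "A \<noteq> Y" and tt: "sum q' A = sum p' {x\<in>X. \<exists>y\<in>A. Rl x y}" for p' q' A
  proof -
    define N where "N = {x\<in>X. \<exists>y\<in>A. Rl x y}"
    have fN: "finite N" using less.prems(1) N_def by simp
    have fA: "finite A" using less.prems(2) A(2) finite_subset by blast
    have "N \<subseteq> X" unfolding N_def by blast
    then have "card N \<le> card X" using less.prems(1) by (rule card_mono[rotated])
    moreover have "A \<subset> Y" using A(2,3) by blast
    then have "card A < card Y" using less.prems(2) by (rule psubset_card_mono[rotated])
    ultimately have c1: "card N + card A < card X + card Y" by simp
    have h1: "hall Rl N A p' q'" unfolding hall_def
    proof (intro allI impI)
      fix B assume B: "B \<subseteq> A"
      have eq: "{x\<in>N. \<exists>y\<in>B. Rl x y} = {x\<in>X. \<exists>y\<in>B. Rl x y}" using B unfolding N_def by blast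
      have "B \<subseteq> Y" using B A(2) by blast
      then have "sum q' B \<le> sum p' {x\<in>X. \<exists>y\<in>B. Rl x y}" using hl unfolding hall_def by blast
      then show "sum q' B \<le> sum p' {x\<in>N. \<exists>y\<in>B. Rl x y}" using eq by simp
    qed
    have n1: "\<forall>x\<in>N. 0 \<le> p' x" using nn(1) unfolding N_def by blast
    have n2: "\<forall>y\<in>A. 0 \<le> q' y" using nn(2) A(2) by blast
    have "\<exists>f. isflow Rl N A p' q' f"
      using less.hyps[OF c1 fN fA n1 n2 h1] .
    then obtain f1 where f1: "isflow Rl N A p' q' f1" by blast
    have "Y - A \<subset> Y" using A(1,2) by blast
    then have "card (Y - A) < card Y" using less.prems(2) by (rule psubset_card_mono[rotated])
    moreover have "card (X - N) \<le> card X" using less.prems(1) by (rule card_mono) blast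
    ultimately have c2: "card (X - N) + card (Y - A) < card X + card Y" by simp
    have h2: "hall Rl (X - N) (Y - A) p' q'" unfolding hall_def
    proof (intro allI impI)
      fix B assume B: "B \<subseteq> Y - A"
      define NAB where "NAB = {x\<in>X. \<exists>y\<in>A \<union> B. Rl x y}"
      have fB: "finite B" using B less.prems(2) finite_subset by blast
      have "sum q' (A \<union> B) = sum q' A + sum q' B"
        using B fA fB by (intro sum.union_disjoint) auto
      moreover have "A \<union> B \<subseteq> Y" using A(2) B by blast
      then have "sum q' (A \<union> B) \<le> sum p' NAB" using hl unfolding hall_def NAB_def by blast
      moreover have "N \<subseteq> NAB" unfolding N_def NAB_def by blast
      moreover have fNAB: "finite NAB" using less.prems(1) NAB_def by simp
      moreover have "sum p' (NAB - N) = sum p' NAB - sum p' N"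
        using fNAB \<open>N \<subseteq> NAB\<close> by (rule sum_diff)
      moreover have "sum q' A = sum p' N" using tt N_def by simp
      ultimately have "sum q' B \<le> sum p' (NAB - N)" by linarith
      moreover have "NAB - N = {x\<in>X - N. \<exists>y\<in>B. Rl x y}" unfolding NAB_def N_def by blast
      ultimately show "sum q' B \<le> sum p' {x\<in>X - N. \<exists>y\<in>B. Rl x y}" by simp
    qed
    have n3: "\<forall>x\<in>X - N. 0 \<le> p' x" using nn(1) by blast
    have n4: "\<forall>y\<in>Y - A. 0 \<le> q' y" using nn(2) by blast
    have fXN: "finite (X - N)" "finite (Y - A)" using less.prems(1,2) by simp_all
    have "\<exists>f. isflow Rl (X - N) (Y - A) p' q' f"
      using less.hyps[OF c2 fXN n3 n4 h2] .
    then obtain f2 where f2: "isflow Rl (X - N) (Y - A) p' q' f2" by blast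
    have "isflow Rl X Y p' q' (\<lambda>x y. f1 x y + f2 x y)"
      by (rule flow_combine[OF less.prems(1,2) A(2)]) (use f1 f2 in \<open>simp_all add: N_def\<close>)
    then show ?thesis by blast
  qed
  show ?case
  proof (cases "Y = {}")
    case True
    have "isflow Rl X Y p q (\<lambda>x y. 0)" using True less.prems(3) unfolding isflow_def by auto
    then show ?thesis by blast
  next
    case False
    then obtain y0 where y0: "y0 \<in> Y" by blast
    show ?thesis
    proof (cases "q y0 = 0")
      case True
      then show ?thesis using zero_y[OF less.prems(3,4,5) y0 True] by blast
    next
      case qnz: False
      have "sum q {y0} \<le> sum p {x\<in>X. \<exists>y\<in>{y0}. Rl x y}" using less.prems(5) y0 unfolding hall_def by blast
      then have "q y0 \<le> sum p {x\<in>X. Rl x y0}" by simp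
      moreover have "q y0 > 0" using qnz less.prems(4) y0 by force
      ultimately obtain x0 where x0: "x0 \<in> X" "Rl x0 y0" "p x0 > 0"
        by (metis (no_types, lifting) mem_Collect_eq not_less order_less_le_trans sum_nonpos)
      show ?thesis
      proof (cases "\<exists>A. A \<noteq> {} \<and> A \<subseteq> Y \<and> A \<noteq> Y \<and> sum q A = sum p {x\<in>X. \<exists>y\<in>A. Rl x y}")
        case True
        then obtain A where "A \<noteq> {}" "A \<subseteq> Y" "A \<noteq> Y" "sum q A = sum p {x\<in>X. \<exists>y\<in>A. Rl x y}" by blast
        then show ?thesis using tight[OF less.prems(3,4,5)] by blast
      next
        case notight: False
        define D where "D = (\<lambda>A. sum p {x\<in>X. \<exists>y\<in>A. Rl x y} - sum q A) ` {A. A \<subseteq> Y \<and> y0 \<notin> A \<and> x0 \<in> {x\<in>X. \<exists>y\<in>A. Rl x y}}"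
        define t where "t = Min ({p x0, q y0} \<union> D)"
        have fD: "finite D" unfolding D_def using less.prems(2) by simp
        have tle0: "t \<le> z" if "z \<in> {p x0, q y0} \<union> D" for z
          unfolding t_def using fD that by (intro Min_le) auto
        have tle: "t \<le> p x0" "t \<le> q y0" "\<And>d. d \<in> D \<Longrightarrow> t \<le> d" using tle0 by auto
        have tin: "t \<in> {p x0, q y0} \<union> D" unfolding t_def using fD by (intro Min_in) auto
        have Dpos: "d > 0" if dD: "d \<in> D" for d
        proof -
          obtain A where A0: "A \<in> {A. A \<subseteq> Y \<and> y0 \<notin> A \<and> x0 \<in> {x\<in>X. \<exists>y\<in>A. Rl x y}}"
            and d: "d = sum p {x\<in>X. \<exists>y\<in>A. Rl x y} - sum q A" using dD unfolding D_def by blast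
          have A: "A \<subseteq> Y" "y0 \<notin> A" "x0 \<in> {x\<in>X. \<exists>y\<in>A. Rl x y}" using A0 by simp_all
          have ne: "A \<noteq> {}" "A \<noteq> Y" using A(3) A(2) y0 by auto
          have "sum q A \<noteq> sum p {x\<in>X. \<exists>y\<in>A. Rl x y}"
          proof -
            show ?thesis
            proof
              assume e: "sum q A = sum p {x\<in>X. \<exists>y\<in>A. Rl x y}"
              have "\<exists>A. A \<noteq> {} \<and> A \<subseteq> Y \<and> A \<noteq> Y \<and> sum q A = sum p {x\<in>X. \<exists>y\<in>A. Rl x y}"
                by (rule exI[where x=A]) (use e A(1) ne in simp)
              with notight show False by (rule notE)
            qed
          qed
          moreover have "sum q A \<le> sum p {x\<in>X. \<exists>y\<in>A. Rl x y}" using less.prems(5) A(1) unfolding hall_def by blast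
          ultimately show ?thesis using d by simp
        qed
        have tpos: "t > 0" using tin Dpos x0(3) \<open>q y0 > 0\<close> by auto
        define p' where "p' = p(x0 := p x0 - t)"
        define q' where "q' = q(y0 := q y0 - t)"
        have nnp: "\<forall>x\<in>X. 0 \<le> p' x" using less.prems(3) tle unfolding p'_def by auto
        have nnq: "\<forall>y\<in>Y. 0 \<le> q' y" using less.prems(4) tle unfolding q'_def by auto
        have hall': "hall Rl X Y p' q'" unfolding hall_def
        proof (intro allI impI)
          fix A assume A: "A \<subseteq> Y"
          define NA where "NA = {x\<in>X. \<exists>y\<in>A. Rl x y}"
          have fNA: "finite NA" using less.prems(1) NA_def by simp
          have fA: "finite A" using A less.prems(2) finite_subset by blast
          have sp: "sum p' NA = sum p NA - (if x0 \<in> NA then t else 0)"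
            unfolding p'_def using sum_upd_sub[OF fNA] by blast
          have sq: "sum q' A = sum q A - (if y0 \<in> A then t else 0)"
            unfolding q'_def using sum_upd_sub[OF fA] by blast
          have hA: "sum q A \<le> sum p NA" using less.prems(5) A unfolding hall_def NA_def by blast
          show "sum q' A \<le> sum p' {x\<in>X. \<exists>y\<in>A. Rl x y}"
            unfolding NA_def[symmetric]
          proof (cases "y0 \<in> A")
            case True
            then have "x0 \<in> NA" using x0 NA_def by auto
            then show "sum q' A \<le> sum p' NA" using sp sq hA True by simp
          next
            case False
            show "sum q' A \<le> sum p' NA"
            proof (cases "x0 \<in> NA")
              case True
              have "sum p NA - sum q A \<in> D" unfolding D_def
                by (rule image_eqI[where x=A]) (use A \<open>y0 \<notin> A\<close> True NA_def in auto)
              then have "t \<le> sum p NA - sum q A" using tle by blast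
              then show ?thesis using sp sq True False by simp
            next
              case False
              then show ?thesis using sp sq hA \<open>y0 \<notin> A\<close> by simp
            qed
          qed
        qed
        have "\<exists>f. isflow Rl X Y p' q' f"
        proof -
          consider "t = p x0" | "t = q y0" | "t \<in> D" using tin by blast
          then show ?thesis
          proof cases
            case 1
            then show ?thesis using zero_x[OF nnp nnq hall' x0(1)] unfolding p'_def by simp
          next
            case 2
            then show ?thesis using zero_y[OF nnp nnq hall' y0] unfolding q'_def by simp
          next
            case 3
            then obtain A where A0: "A \<in> {A. A \<subseteq> Y \<and> y0 \<notin> A \<and> x0 \<in> {x\<in>X. \<exists>y\<in>A. Rl x y}}"
              and d: "t = sum p {x\<in>X. \<exists>y\<in>A. Rl x y} - sum q A" unfolding D_def by (rule imageE)
            have A: "A \<subseteq> Y" "y0 \<notin> A" "x0 \<in> {x\<in>X. \<exists>y\<in>A. Rl x y}" using A0 by simp_all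
            define NA where "NA = {x\<in>X. \<exists>y\<in>A. Rl x y}"
            have fNA: "finite NA" using less.prems(1) NA_def by simp
            have fA: "finite A" using A less.prems(2) finite_subset by blast
            have sp: "sum p' NA = sum p NA - (if x0 \<in> NA then t else 0)"
              unfolding p'_def using sum_upd_sub[OF fNA] by blast
            have sq: "sum q' A = sum q A - (if y0 \<in> A then t else 0)"
              unfolding q'_def using sum_upd_sub[OF fA] by blast
            have "sum q' A = sum p' NA" using sp sq A(2,3) d NA_def by simp
            moreover have "A \<noteq> {}" using A(3) by auto
            moreover have "A \<noteq> Y" using A(2) y0 by auto
            ultimately show ?thesis using tight[OF nnp nnq hall' _ A(1), of ] unfolding NA_def by blast
          qed
        qed
        then obtain f' where f': "isflow Rl X Y p' q' f'" by blast
        define f where "f = (\<lambda>x y. f' x y + (if x = x0 \<and> y = y0 then t else 0))"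
        have rowi: "sum (\<lambda>y. if x = x0 \<and> y = y0 then t else (0::real)) Y = (if x = x0 then t else 0)" for x
          using y0 less.prems(2) by (cases "x = x0") auto
        have coli: "(\<Sum>x\<in>X. if x = x0 \<and> y = y0 then t else (0::real)) = (if y = y0 then t else 0)" for y
          using x0(1) less.prems(1) by (cases "y = y0") auto
        have "isflow Rl X Y p q f" unfolding isflow_def
        proof (intro conjI)
          show "\<forall>x y. 0 \<le> f x y" using f' tpos unfolding isflow_def f_def by (simp add: add_nonneg_nonneg)
          show "\<forall>x y. f x y \<noteq> 0 \<longrightarrow> x \<in> X \<and> y \<in> Y \<and> Rl x y"
          proof (intro allI impI)
            fix x y assume h: "f x y \<noteq> 0"
            show "x \<in> X \<and> y \<in> Y \<and> Rl x y"
            proof (cases "f' x y = 0")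
              case True
              then have "x = x0 \<and> y = y0" using h unfolding f_def by (auto split: if_splits)
              then show ?thesis using x0 y0 by blast
            next
              case False
              then show ?thesis using f' unfolding isflow_def by blast
            qed
          qed
          show "\<forall>x\<in>X. sum (f x) Y \<le> p x"
          proof
            fix x assume "x \<in> X"
            have "sum (f x) Y = sum (f' x) Y + (if x = x0 then t else 0)"
              unfolding f_def using rowi by (simp add: sum.distrib)
            moreover have "sum (f' x) Y \<le> p' x" using f' \<open>x \<in> X\<close> unfolding isflow_def by blast
            ultimately show "sum (f x) Y \<le> p x" unfolding p'_def by (cases "x = x0") simp_all
          qed
          show "\<forall>y\<in>Y. (\<Sum>x\<in>X. f x y) = q y"
          proof
            fix y assume "y \<in> Y"
            have "(\<Sum>x\<in>X. f x y) = (\<Sum>x\<in>X. f' x y) + (if y = y0 then t else 0)"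
              unfolding f_def using coli by (simp add: sum.distrib)
            moreover have "(\<Sum>x\<in>X. f' x y) = q' y" using f' \<open>y \<in> Y\<close> unfolding isflow_def by blast
            ultimately show "(\<Sum>x\<in>X. f x y) = q y" unfolding q'_def by (cases "y = y0") simp_all
          qed
        qed
        then show ?thesis by blast
      qed
    qed
  qed
qed


lemma flow_eps:
  fixes p :: "'x \<Rightarrow> real" and q :: "'y \<Rightarrow> real"
  assumes fX: "finite X" and fY: "finite Y" and np: "\<forall>x\<in>X. 0 \<le> p x" and nq: "\<forall>y\<in>Y. 0 \<le> q y" and e: "0 \<le> e"
    and H: "\<And>A. A \<subseteq> Y \<Longrightarrow> sum q A \<le> sum p {x\<in>X. \<exists>y\<in>A. Rl x y} + e"
  shows "\<exists>f. (\<forall>x y. 0 \<le> f x y) \<and> (\<forall>x y. f x y \<noteq> 0 \<longrightarrow> x \<in> X \<and> y \<in> Y \<and> Rl x y)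
     \<and> (\<forall>x\<in>X. sum (f x) Y \<le> p x) \<and> (\<forall>y\<in>Y. (\<Sum>x\<in>X. f x y) \<le> q y)
     \<and> sum q Y - e \<le> (\<Sum>x\<in>X. sum (f x) Y)"
proof -
  define X' where "X' = insert None (Some ` X)"
  define p' where "p' = case_option e p"
  define Rl' where "Rl' = (\<lambda>oo y. case oo of None \<Rightarrow> True | Some x \<Rightarrow> Rl x y)"
  have fX': "finite X'" using fX X'_def by simp
  have np': "\<forall>x\<in>X'. 0 \<le> p' x" using np e unfolding X'_def p'_def by auto
  have hl: "hall Rl' X' Y p' q" unfolding hall_def
  proof (intro allI impI)
    fix A assume A: "A \<subseteq> Y"
    show "sum q A \<le> sum p' {x\<in>X'. \<exists>y\<in>A. Rl' x y}"
    proof (cases "A = {}")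
      case True then show ?thesis by simp
    next
      case False
      have eq: "{x\<in>X'. \<exists>y\<in>A. Rl' x y} = insert None (Some ` {x\<in>X. \<exists>y\<in>A. Rl x y})"
        using False unfolding X'_def Rl'_def by (auto split: option.splits)
      have "sum p' {x\<in>X'. \<exists>y\<in>A. Rl' x y} = e + sum p {x\<in>X. \<exists>y\<in>A. Rl x y}"
        unfolding eq using fX by (simp add: sum.reindex p'_def)
      then show ?thesis using H[OF A] by simp
    qed
  qed
  obtain f' where f': "isflow Rl' X' Y p' q f'" using flow_exists[OF fX' fY np' nq hl] by blast
  define f where "f = (\<lambda>x y. f' (Some x) y)"
  have colX': "(\<Sum>x\<in>X'. f' x y) = f' None y + (\<Sum>x\<in>X. f x y)" for y
    unfolding X'_def f_def using fX by (simp add: sum.reindex)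
  have col: "f' None y + (\<Sum>x\<in>X. f x y) = q y" if "y \<in> Y" for y
    using f' that colX' unfolding isflow_def by simp
  have rowN: "sum (f' None) Y \<le> e" using f' unfolding isflow_def X'_def p'_def by simp
  have nn: "\<forall>x y. 0 \<le> f' x y" using f' unfolding isflow_def by blast
  have "(\<Sum>x\<in>X. sum (f x) Y) = (\<Sum>y\<in>Y. \<Sum>x\<in>X. f x y)" by (rule sum.swap)
  also have "\<dots> = (\<Sum>y\<in>Y. q y - f' None y)" using col by (intro sum.cong) (auto simp: algebra_simps)
  also have "\<dots> = sum q Y - sum (f' None) Y" by (simp add: sum_subtractf)
  finally have tot: "sum q Y - e \<le> (\<Sum>x\<in>X. sum (f x) Y)" using rowN by simp
  show ?thesis
  proof (intro exI conjI)
    show "\<forall>x y. 0 \<le> f x y" using nn f_def by simp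
    show "\<forall>x y. f x y \<noteq> 0 \<longrightarrow> x \<in> X \<and> y \<in> Y \<and> Rl x y"
      using f' unfolding isflow_def f_def X'_def Rl'_def by fastforce
    show "\<forall>x\<in>X. sum (f x) Y \<le> p x" using f' unfolding isflow_def f_def X'_def p'_def by simp
    show "\<forall>y\<in>Y. (\<Sum>x\<in>X. f x y) \<le> q y" using col nn by (metis le_add_same_cancel2)
    show "sum q Y - e \<le> (\<Sum>x\<in>X. sum (f x) Y)" by (rule tot)
  qed
qed



lemma ds_states:
  "states (direct_sum M N) = Inl ` states M \<union> Inr ` states N"
  by (simp add: direct_sum_def)

declare ds_states[simp]

lemma ds_simps[simp]:
  "prob (direct_sum M N) (Inl s) (Inl s') = prob M s s'"
  "prob (direct_sum M N) (Inr t) (Inr t') = prob N t t'"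
  "prob (direct_sum M N) (Inl s) (Inr t) = 0"
  "prob (direct_sum M N) (Inr t) (Inl s) = 0"
  "rate (direct_sum M N) (Inl s) = rate M s"
  "rate (direct_sum M N) (Inr t) = rate N t"
  "label (direct_sum M N) (Inl s) = label M s"
  "label (direct_sum M N) (Inr t) = label N t"
  "initial (direct_sum M N) = Inl (initial M)"
  by (simp_all add: direct_sum_def)

lemma probset_ds_Inl:
  assumes "finite (states M)" "finite (states N)"
  shows "probset (direct_sum M N) (Inl s) A = probset M s (Inl -` A)"
proof -
  have "A \<inter> states (direct_sum M N) = Inl ` (Inl -` A \<inter> states M) \<union> Inr ` (Inr -` A \<inter> states N)"
    by auto
  then have "probset (direct_sum M N) (Inl s) A =
      sum (prob (direct_sum M N) (Inl s)) (Inl ` (Inl -` A \<inter> states M)) +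
      sum (prob (direct_sum M N) (Inl s)) (Inr ` (Inr -` A \<inter> states N))"
    unfolding probset_def using assms by (simp only:) (intro sum.union_disjoint, auto)
  also have "sum (prob (direct_sum M N) (Inl s)) (Inr ` (Inr -` A \<inter> states N)) = 0"
    by (intro sum.neutral) auto
  also have "sum (prob (direct_sum M N) (Inl s)) (Inl ` (Inl -` A \<inter> states M)) = probset M s (Inl -` A)"
    unfolding probset_def by (subst sum.reindex) (auto simp: inj_on_def)
  finally show ?thesis by simp
qed

lemma probset_ds_Inr:
  assumes "finite (states M)" "finite (states N)"
  shows "probset (direct_sum M N) (Inr s) A = probset N s (Inr -` A)"
proof -
  have "A \<inter> states (direct_sum M N) = Inl ` (Inl -` A \<inter> states M) \<union> Inr ` (Inr -` A \<inter> states N)"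
    by auto
  then have "probset (direct_sum M N) (Inr s) A =
      sum (prob (direct_sum M N) (Inr s)) (Inl ` (Inl -` A \<inter> states M)) +
      sum (prob (direct_sum M N) (Inr s)) (Inr ` (Inr -` A \<inter> states N))"
    unfolding probset_def using assms by (simp only:) (intro sum.union_disjoint, auto)
  also have "sum (prob (direct_sum M N) (Inr s)) (Inl ` (Inl -` A \<inter> states M)) = 0"
    by (intro sum.neutral) auto
  also have "sum (prob (direct_sum M N) (Inr s)) (Inr ` (Inr -` A \<inter> states N)) = probset N s (Inr -` A)"
    unfolding probset_def by (subst sum.reindex) (auto simp: inj_on_def)
  finally show ?thesis by simp
qed

lemma is_ctmc_ds:
  assumes "is_ctmc M" "is_ctmc N"
  shows "is_ctmc (direct_sum M N)"
proof -
  have fM: "finite (states M)" and fN: "finite (states N)" using assms unfolding is_ctmc_def by auto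
  have sum1: "(\<Sum>t\<in>states (direct_sum M N). prob (direct_sum M N) s t) = 1" if "s \<in> states (direct_sum M N)" for s
  proof -
    have "(\<Sum>t\<in>states (direct_sum M N). prob (direct_sum M N) s t) = probset (direct_sum M N) s UNIV"
      unfolding probset_def by simp
    also have "\<dots> = 1"
    proof (cases s)
      case (Inl a)
      then have "a \<in> states M" using that by auto
      have "probset (direct_sum M N) s UNIV = probset M a UNIV" using Inl probset_ds_Inl[OF fM fN] by simp
      then show ?thesis using \<open>a \<in> states M\<close> assms(1) unfolding is_ctmc_def probset_def by simp
    next
      case (Inr a)
      then have "a \<in> states N" using that by auto
      have "probset (direct_sum M N) s UNIV = probset N a UNIV" using Inr probset_ds_Inr[OF fM fN] by simp
      then show ?thesis using \<open>a \<in> states N\<close> assms(2) unfolding is_ctmc_def probset_def by simp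
    qed
    finally show ?thesis .
  qed
  have nn: "\<forall>t. 0 \<le> prob (direct_sum M N) s t" if "s \<in> states (direct_sum M N)" for s
  proof
    fix t show "0 \<le> prob (direct_sum M N) s t"
      using that assms unfolding is_ctmc_def by (cases s; cases t) auto
  qed
  have z: "\<forall>t. t \<notin> states (direct_sum M N) \<longrightarrow> prob (direct_sum M N) s t = 0" if "s \<in> states (direct_sum M N)" for s
  proof (intro allI impI)
    fix t assume "t \<notin> states (direct_sum M N)"
    then show "prob (direct_sum M N) s t = 0"
      using that assms unfolding is_ctmc_def by (cases s; cases t) (auto simp: image_iff)
  qed
  have r: "\<forall>s\<in>states (direct_sum M N). rate (direct_sum M N) s > 0"
  proof
    fix s assume "s \<in> states (direct_sum M N)"
    then show "rate (direct_sum M N) s > 0" using assms unfolding is_ctmc_def by (cases s) auto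
  qed
  show ?thesis unfolding is_ctmc_def using fM fN sum1 nn z r assms
    by (auto simp: is_ctmc_def)
qed

lemma probset_mono:
  assumes "finite (states X)" "\<And>t. 0 \<le> prob X s t" "A \<inter> states X \<subseteq> B"
  shows "probset X s A \<le> probset X s B"
  unfolding probset_def using assms by (intro sum_mono2) auto

declare ds_states[simp del]

lemma probset_cong:
  assumes "A \<inter> states X = B \<inter> states X"
  shows "probset X s A = probset X s B"
  unfolding probset_def using assms by simp

lemma probset_map:
  assumes inj: "inj_on h (states X)" and st: "states Y = h ` states X"
    and pr: "\<And>t. t \<in> states X \<Longrightarrow> prob Y (h a) (h t) = prob X a t"
  shows "probset Y (h a) A = probset X a (h -` A)"
proof -
  have "A \<inter> states Y = h ` (h -` A \<inter> states X)" using st by auto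
  moreover have "inj_on h (h -` A \<inter> states X)" using inj by (rule inj_on_subset) auto
  ultimately have "probset Y (h a) A = sum (\<lambda>t. prob Y (h a) (h t)) (h -` A \<inter> states X)"
    unfolding probset_def by (simp add: sum.reindex)
  also have "\<dots> = probset X a (h -` A)" unfolding probset_def using pr by (intro sum.cong) auto
  finally show ?thesis .
qed

lemma edb_transfer:
  fixes X :: "('a,'ap) ctmc" and Y :: "('b,'ap) ctmc" and h :: "'a \<Rightarrow> 'b"
  assumes inj: "inj_on h (states X)" and st: "states Y = h ` states X"
    and pr: "\<And>s t. s \<in> states X \<Longrightarrow> t \<in> states X \<Longrightarrow> prob Y (h s) (h t) = prob X s t"
    and ra: "\<And>s. s \<in> states X \<Longrightarrow> rate Y (h s) = rate X s"
    and la: "\<And>s. s \<in> states X \<Longrightarrow> label Y (h s) = label X s"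
    and b: "eps_delta_bisimilar e d X s s'"
  shows "eps_delta_bisimilar e d Y (h s) (h s')"
proof -
  obtain R where R: "eps_delta_bisim e d X R" "(s, s') \<in> R" using b unfolding eps_delta_bisimilar_def by blast
  have Rsub: "R \<subseteq> states X \<times> states X" using R(1) unfolding eps_delta_bisim_def by blast
  define R' where "R' = map_prod h h ` R"
  have "eps_delta_bisim e d Y R'" unfolding eps_delta_bisim_def
  proof (intro conjI)
    show "R' \<subseteq> states Y \<times> states Y" using Rsub st unfolding R'_def by auto
    show "refl_on (states Y) R'" using R(1) st unfolding eps_delta_bisim_def refl_on_def R'_def by auto
    show "sym R'" using R(1) unfolding eps_delta_bisim_def sym_def R'_def by auto
    have P: "label Y x = label Y y \<and> \<bar>ln (rate Y x) - ln (rate Y y)\<bar> \<le> d \<and>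
          (\<forall>A\<subseteq>states Y. probset Y x A \<le> probset Y y (R' `` A) + e)"
      if ab: "(a, b) \<in> R" and x: "x = h a" and y: "y = h b" for a b x y
    proof -
      have aX: "a \<in> states X" and bX: "b \<in> states X" using ab Rsub by auto
      have cond: "label X a = label X b" "\<bar>ln (rate X a) - ln (rate X b)\<bar> \<le> d"
        "\<And>B. B \<subseteq> states X \<Longrightarrow> probset X a B \<le> probset X b (R `` B) + e"
        using R(1) ab unfolding eps_delta_bisim_def by auto
      show "label Y x = label Y y \<and> \<bar>ln (rate Y x) - ln (rate Y y)\<bar> \<le> d \<and>
          (\<forall>A\<subseteq>states Y. probset Y x A \<le> probset Y y (R' `` A) + e)"
      proof (intro conjI allI impI)
        show "label Y x = label Y y" using la aX bX cond x y by simp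
        show "\<bar>ln (rate Y x) - ln (rate Y y)\<bar> \<le> d" using ra aX bX cond x y by simp
        fix A assume A: "A \<subseteq> states Y"
        define B where "B = h -` A \<inter> states X"
        have "probset Y x A = probset X a (h -` A)" unfolding x using probset_map[OF inj st] pr aX by blast
        also have "\<dots> = probset X a B" unfolding B_def by (rule probset_cong) auto
        also have "\<dots> \<le> probset X b (R `` B) + e" using cond(3) B_def by blast
        also have "probset X b (R `` B) = probset X b (h -` (R' `` A))"
        proof (rule probset_cong)
          show "R `` B \<inter> states X = h -` (R' `` A) \<inter> states X"
          proof (intro equalityI subsetI)
            fix z assume "z \<in> R `` B \<inter> states X"
            then obtain a' where "a' \<in> B" "(a', z) \<in> R" "z \<in> states X" by blast
            then show "z \<in> h -` (R' `` A) \<inter> states X" unfolding R'_def B_def by force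
          next
            fix z assume z: "z \<in> h -` (R' `` A) \<inter> states X"
            then obtain a' b' where ab': "(a', b') \<in> R" "h a' \<in> A" "h b' = h z" unfolding R'_def by force
            then have "b' = z" using inj Rsub z unfolding inj_on_def by blast
            moreover have "a' \<in> B" using ab' Rsub unfolding B_def by auto
            ultimately show "z \<in> R `` B \<inter> states X" using ab' z by blast
          qed
        qed
        also have "probset X b (h -` (R' `` A)) = probset Y y (R' `` A)"
          unfolding y using probset_map[OF inj st] pr bX by metis
        finally show "probset Y x A \<le> probset Y y (R' `` A) + e" by simp
      qed
    qed
    show "\<forall>(x, y)\<in>R'. label Y x = label Y y \<and> \<bar>ln (rate Y x) - ln (rate Y y)\<bar> \<le> d \<and>
          (\<forall>A\<subseteq>states Y. probset Y x A \<le> probset Y y (R' `` A) + e)"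
    proof -
      have P': "\<And>z. z \<in> R' \<Longrightarrow> \<exists>a b. (a, b) \<in> R \<and> z = (h a, h b)" unfolding R'_def by auto
      show ?thesis using P P' by fastforce
    qed
  qed
  moreover have "(h s, h s') \<in> R'" using R(2) unfolding R'_def by force
  ultimately show ?thesis unfolding eps_delta_bisimilar_def by blast
qed

lemma strong_transfer:
  fixes X :: "('a,'ap) ctmc" and Y :: "('b,'ap) ctmc" and h :: "'a \<Rightarrow> 'b"
  assumes inj: "inj_on h (states X)" and st: "states Y = h ` states X"
    and pr: "\<And>s t. s \<in> states X \<Longrightarrow> t \<in> states X \<Longrightarrow> prob Y (h s) (h t) = prob X s t"
    and ra: "\<And>s. s \<in> states X \<Longrightarrow> rate Y (h s) = rate X s"
    and la: "\<And>s. s \<in> states X \<Longrightarrow> label Y (h s) = label X s"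
    and b: "strong_bisimilar X s s'"
  shows "strong_bisimilar Y (h s) (h s')"
proof -
  obtain R where R: "strong_bisim X R" "(s, s') \<in> R" using b unfolding strong_bisimilar_def by blast
  have eq: "equiv (states X) R" using R(1) unfolding strong_bisim_def by blast
  have Rsub: "R \<subseteq> states X \<times> states X" using eq unfolding equiv_def by blast
  define R' where "R' = map_prod h h ` R"
  have img: "R' `` {h x} = h ` (R `` {x})" if "x \<in> states X" for x
  proof (intro equalityI subsetI)
    fix z assume "z \<in> R' `` {h x}"
    then obtain a b where "(a, b) \<in> R" "h a = h x" "z = h b" unfolding R'_def by force
    moreover then have "a = x" using inj Rsub that unfolding inj_on_def by blast
    ultimately show "z \<in> h ` (R `` {x})" by blast
  next
    fix z assume "z \<in> h ` (R `` {x})"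
    then show "z \<in> R' `` {h x}" unfolding R'_def by force
  qed
  have "strong_bisim Y R'" unfolding strong_bisim_def
  proof (intro conjI)
    show "equiv (states Y) R'"
    proof (rule equivI)
      show "R' \<subseteq> states Y \<times> states Y" using Rsub st unfolding R'_def by auto
      show "refl_on (states Y) R'" using eq st unfolding equiv_def refl_on_def R'_def by auto
      show "sym R'" using eq unfolding equiv_def sym_def R'_def by auto
      show "trans R'" unfolding trans_def
      proof (intro allI impI)
        fix x y z assume "(x, y) \<in> R'" "(y, z) \<in> R'"
        then obtain a b b' c where "(a, b) \<in> R" "(b', c) \<in> R" "x = h a" "y = h b" "h b' = h b" "z = h c"
          unfolding R'_def by force
        moreover then have "b = b'" using inj Rsub unfolding inj_on_def by blast
        ultimately show "(x, z) \<in> R'" using eq unfolding equiv_def trans_def R'_def by blast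
      qed
    qed
    have P: "label Y x = label Y y \<and> rate Y x = rate Y y \<and>
          (\<forall>C\<in>states Y // R'. probset Y x C = probset Y y C)"
      if ab: "(a, b) \<in> R" and x: "x = h a" and y: "y = h b" for a b x y
    proof -
      have aX: "a \<in> states X" and bX: "b \<in> states X" using ab Rsub by auto
      have cond: "label X a = label X b" "rate X a = rate X b"
        "\<And>C. C \<in> states X // R \<Longrightarrow> probset X a C = probset X b C"
        using R(1) ab unfolding strong_bisim_def by auto
      show "label Y x = label Y y \<and> rate Y x = rate Y y \<and>
          (\<forall>C\<in>states Y // R'. probset Y x C = probset Y y C)"
      proof (intro conjI ballI)
        show "label Y x = label Y y" using la aX bX cond x y by simp
        show "rate Y x = rate Y y" using ra aX bX cond x y by simp
        fix C assume "C \<in> states Y // R'"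
        then obtain z where z: "z \<in> states Y" "C = R' `` {z}" by (rule quotientE) blast
        then obtain w where w: "w \<in> states X" "z = h w" using st by blast
        define C0 where "C0 = R `` {w}"
        have C0q: "C0 \<in> states X // R" unfolding C0_def using w(1) by (rule quotientI)
        have C: "C = h ` C0" using img w z C0_def by simp
        have C0s: "C0 \<subseteq> states X" using Rsub C0_def by auto
        have pre: "h -` C \<inter> states X = C0 \<inter> states X"
          using C C0s inj unfolding inj_on_def by auto
        have "probset Y x C = probset X a (h -` C)" unfolding x using probset_map[OF inj st] pr aX by blast
        also have "\<dots> = probset X a C0" using pre by (rule probset_cong)
        also have "\<dots> = probset X b C0" using cond(3) C0q by blast
        also have "\<dots> = probset X b (h -` C)" using pre by (intro probset_cong) simp
        also have "\<dots> = probset Y y C" unfolding y using probset_map[OF inj st] pr bX by metis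
        finally show "probset Y x C = probset Y y C" .
      qed
    qed
    show "\<forall>(x, y)\<in>R'. label Y x = label Y y \<and> rate Y x = rate Y y \<and>
          (\<forall>C\<in>states Y // R'. probset Y x C = probset Y y C)"
    proof -
      have P': "\<And>z. z \<in> R' \<Longrightarrow> \<exists>a b. (a, b) \<in> R \<and> z = (h a, h b)" unfolding R'_def by auto
      show ?thesis using P P' by fastforce
    qed
  qed
  moreover have "(h s, h s') \<in> R'" using R(2) unfolding R'_def by force
  ultimately show ?thesis unfolding strong_bisimilar_def by blast
qed


lemma edb_from_pairs:
  fixes X :: "('a,'ap) ctmc"
  assumes fin: "finite (states X)" and nn: "\<And>s t. s \<in> states X \<Longrightarrow> 0 \<le> prob X s t"
    and e: "0 \<le> e" and d: "0 \<le> d"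
    and L: "L \<subseteq> states X \<times> states X"
    and cond: "\<And>a b A. (a, b) \<in> L \<union> L\<inverse> \<Longrightarrow> A \<subseteq> states X \<Longrightarrow>
        probset X a A \<le> probset X b ((Id_on (states X) \<union> L \<union> L\<inverse>) `` A) + e"
    and lab: "\<And>a b. (a, b) \<in> L \<Longrightarrow> label X a = label X b"
    and rt: "\<And>a b. (a, b) \<in> L \<Longrightarrow> \<bar>ln (rate X a) - ln (rate X b)\<bar> \<le> d"
  shows "eps_delta_bisim e d X (Id_on (states X) \<union> L \<union> L\<inverse>)"
proof -
  let ?Q = "Id_on (states X) \<union> L \<union> L\<inverse>"
  have P: "label X a = label X b \<and> \<bar>ln (rate X a) - ln (rate X b)\<bar> \<le> d \<and>
        (\<forall>A\<subseteq>states X. probset X a A \<le> probset X b (?Q `` A) + e)" if ab: "(a, b) \<in> ?Q" for a b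
  proof (cases "(a, b) \<in> L \<union> L\<inverse>")
    case True
    have "label X a = label X b" using True lab by (metis UnE converseD)
    moreover have "\<bar>ln (rate X a) - ln (rate X b)\<bar> \<le> d" using True rt
      by (metis UnE abs_minus_commute converseD)
    ultimately show ?thesis using cond True by blast
  next
    case False
    then have "a = b" "a \<in> states X" using ab by auto
    moreover have "probset X a A \<le> probset X a (?Q `` A) + e" if "A \<subseteq> states X" for A
    proof -
      have "probset X a A \<le> probset X a (?Q `` A)"
        using \<open>a \<in> states X\<close> by (intro probset_mono[OF fin nn]) auto
      then show ?thesis using e by simp
    qed
    ultimately show ?thesis using d by simp
  qed
  show ?thesis unfolding eps_delta_bisim_def
  proof (intro conjI)
    show "?Q \<subseteq> states X \<times> states X" using L by auto
    show "refl_on (states X) ?Q" unfolding refl_on_def by auto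
    show "sym ?Q" unfolding sym_def by auto
    show "\<forall>(a, b)\<in>?Q. label X a = label X b \<and> \<bar>ln (rate X a) - ln (rate X b)\<bar> \<le> d \<and>
        (\<forall>A\<subseteq>states X. probset X a A \<le> probset X b (?Q `` A) + e)" using P by blast
  qed
qed



locale constr =
  fixes M :: "('s, 'ap) ctmc" and N :: "('t, 'ap) ctmc" and R :: "(('s + 't) \<times> ('s + 't)) set"
    and \<epsilon> \<delta> :: real
  assumes cM: "is_ctmc M" and cN: "is_ctmc N" and eps: "0 \<le> \<epsilon>"
    and Rb: "eps_delta_bisim \<epsilon> \<delta> (direct_sum M N) R"
    and init: "(Inl (initial M), Inr (initial N)) \<in> R"
begin

abbreviation "D \<equiv> direct_sum M N"
abbreviation "SD \<equiv> states (direct_sum M N)"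
abbreviation "SN \<equiv> states N"
abbreviation "SM \<equiv> states M"

lemma cD: "is_ctmc D" using is_ctmc_ds[OF cM cN] .

lemma fin: "finite SD" "finite SN" "finite SM"
  using cD cN cM unfolding is_ctmc_def by auto

lemma D_nn: "x \<in> SD \<Longrightarrow> 0 \<le> prob D x t"
  using cD unfolding is_ctmc_def by blast
lemma D_sum: "x \<in> SD \<Longrightarrow> sum (prob D x) SD = 1"
  using cD unfolding is_ctmc_def by blast
lemma D_zero: "x \<in> SD \<Longrightarrow> t \<notin> SD \<Longrightarrow> prob D x t = 0"
  using cD unfolding is_ctmc_def by blast
lemma N_nn: "x \<in> SN \<Longrightarrow> 0 \<le> prob N x t"
  using cN unfolding is_ctmc_def by blast
lemma N_sum: "x \<in> SN \<Longrightarrow> sum (prob N x) SN = 1"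
  using cN unfolding is_ctmc_def by blast
lemma N_zero: "x \<in> SN \<Longrightarrow> t \<notin> SN \<Longrightarrow> prob N x t = 0"
  using cN unfolding is_ctmc_def by blast
lemma M_nn: "x \<in> SM \<Longrightarrow> 0 \<le> prob M x t"
  using cM unfolding is_ctmc_def by blast

lemma Rsub: "R \<subseteq> SD \<times> SD" using Rb unfolding eps_delta_bisim_def by blast
lemma Rrefl: "x \<in> SD \<Longrightarrow> (x, x) \<in> R" using Rb unfolding eps_delta_bisim_def refl_on_def by blast
lemma Rsym: "(a, b) \<in> R \<Longrightarrow> (b, a) \<in> R" using Rb unfolding eps_delta_bisim_def sym_def by blast
lemma Rcond: "(a, b) \<in> R \<Longrightarrow> label D a = label D b \<and> \<bar>ln (rate D a) - ln (rate D b)\<bar> \<le> \<delta> \<and>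
   (\<forall>A\<subseteq>SD. probset D a A \<le> probset D b (R `` A) + \<epsilon>)"
  using Rb unfolding eps_delta_bisim_def by blast

definition T :: "(('s + 't) \<times> 't) set" where
  "T = {(x, w). x \<in> SD \<and> w \<in> SN \<and> (x, Inr w) \<in> R}"

lemma T_sub: "T \<subseteq> SD \<times> SN" unfolding T_def by auto
lemma fT: "finite T" using finite_subset[OF T_sub] fin by blast
lemma init_T: "(Inl (initial M), initial N) \<in> T"
  using init Rsub cN unfolding T_def is_ctmc_def by auto

definition goodf :: "('s + 't) \<Rightarrow> 't \<Rightarrow> (('s + 't) \<Rightarrow> 't \<Rightarrow> real) \<Rightarrow> bool" where
  "goodf x w f \<longleftrightarrow> (\<forall>a b. 0 \<le> f a b) \<and> (\<forall>a b. f a b \<noteq> 0 \<longrightarrow> a \<in> SD \<and> b \<in> SN \<and> (a, Inr b) \<in> R)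
     \<and> (\<forall>a\<in>SD. sum (f a) SN \<le> prob D x a) \<and> (\<forall>b\<in>SN. (\<Sum>a\<in>SD. f a b) \<le> prob N w b)
     \<and> sum (prob N w) SN - \<epsilon> \<le> (\<Sum>a\<in>SD. sum (f a) SN)"

lemma goodf_ex:
  assumes "(x, w) \<in> T"
  shows "\<exists>f. goodf x w f"
proof -
  have x: "x \<in> SD" and w: "w \<in> SN" and xw: "(x, Inr w) \<in> R" using assms unfolding T_def by auto
  have H: "sum (prob N w) A \<le> sum (prob D x) {a\<in>SD. \<exists>b\<in>A. (a, Inr b) \<in> R} + \<epsilon>" if A: "A \<subseteq> SN" for A
  proof -
    have "Inr ` A \<subseteq> SD" using A by (auto simp: ds_states)
    then have "probset D (Inr w) (Inr ` A) \<le> probset D x (R `` (Inr ` A)) + \<epsilon>"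
      using Rcond[OF Rsym[OF xw]] by blast
    moreover have "probset D (Inr w) (Inr ` A) = sum (prob N w) A"
      using probset_ds_Inr[OF fin(3) fin(2)] A unfolding probset_def
      by (simp add: inj_vimage_image_eq Int_absorb2)
    moreover have "probset D x (R `` (Inr ` A)) = sum (prob D x) {a\<in>SD. \<exists>b\<in>A. (a, Inr b) \<in> R}"
      unfolding probset_def
    proof (rule arg_cong[where f="sum (prob D x)"])
      show "R `` Inr ` A \<inter> SD = {a \<in> SD. \<exists>b\<in>A. (a, Inr b) \<in> R}"
        using Rsym by blast
    qed
    ultimately show ?thesis by simp
  qed
  have "\<exists>f. (\<forall>a b. 0 \<le> f a b) \<and> (\<forall>a b. f a b \<noteq> 0 \<longrightarrow> a \<in> SD \<and> b \<in> SN \<and> (a, Inr b) \<in> R)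
     \<and> (\<forall>a\<in>SD. sum (f a) SN \<le> prob D x a) \<and> (\<forall>b\<in>SN. (\<Sum>a\<in>SD. f a b) \<le> prob N w b)
     \<and> sum (prob N w) SN - \<epsilon> \<le> (\<Sum>a\<in>SD. sum (f a) SN)"
    by (rule flow_eps[OF fin(1) fin(2) _ _ eps H]) (use D_nn[OF x] N_nn[OF w] in auto)
  then show ?thesis unfolding goodf_def by blast
qed

definition F :: "('s + 't) \<Rightarrow> 't \<Rightarrow> ('s + 't) \<Rightarrow> 't \<Rightarrow> real" where
  "F x w = (SOME f. goodf x w f)"

lemma F_good: "(x, w) \<in> T \<Longrightarrow> goodf x w (F x w)"
  unfolding F_def using goodf_ex by (rule someI_ex) 


definition colres :: "('s + 't) \<Rightarrow> 't \<Rightarrow> 't \<Rightarrow> real" where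
  "colres x w b = prob N w b - (\<Sum>a\<in>SD. F x w a b)"

definition G :: "('s + 't) \<Rightarrow> 't \<Rightarrow> ('s + 't) \<Rightarrow> 't \<Rightarrow> real" where
  "G x w a b = F x w a b + (if a = Inr b then colres x w b else 0)"

definition K :: "(('s + 't) \<times> 't) \<Rightarrow> (('s + 't) \<times> 't) \<Rightarrow> real" where
  "K c d = (if d \<in> T then G (fst c) (snd c) (fst d) (snd d) else 0)"

context
  fixes x w assumes xwT: "(x, w) \<in> T"
begin

lemma xSD: "x \<in> SD" and wSN: "w \<in> SN" and xwR: "(x, Inr w) \<in> R"
  using xwT unfolding T_def by auto

lemma Fg: "goodf x w (F x w)" using F_good[OF xwT] .

lemma F_nn: "0 \<le> F x w a b" using Fg unfolding goodf_def by blast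
lemma F_supp: "F x w a b \<noteq> 0 \<Longrightarrow> a \<in> SD \<and> b \<in> SN \<and> (a, Inr b) \<in> R" using Fg unfolding goodf_def by blast
lemma F_row: "a \<in> SD \<Longrightarrow> sum (F x w a) SN \<le> prob D x a" using Fg unfolding goodf_def by blast
lemma F_col: "b \<in> SN \<Longrightarrow> (\<Sum>a\<in>SD. F x w a b) \<le> prob N w b" using Fg unfolding goodf_def by blast
lemma F_tot: "1 - \<epsilon> \<le> (\<Sum>a\<in>SD. sum (F x w a) SN)" using Fg N_sum[OF wSN] unfolding goodf_def by simp

lemma colres_nn: "0 \<le> colres x w b"
proof (cases "b \<in> SN")
  case True then show ?thesis using F_col unfolding colres_def by simp
next
  case False
  then have "F x w a b = 0" for a using F_supp by blast
  then show ?thesis using N_zero[OF wSN False] unfolding colres_def by simp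
qed

lemma G_nn: "0 \<le> G x w a b" unfolding G_def using F_nn colres_nn by simp

lemma G_zero: "a \<in> SD \<Longrightarrow> b \<in> SN \<Longrightarrow> (a, b) \<notin> T \<Longrightarrow> G x w a b = 0"
proof -
  assume a: "a \<in> SD" and b: "b \<in> SN" and n: "(a, b) \<notin> T"
  have "(a, Inr b) \<notin> R" using a b n unfolding T_def by auto
  then have "F x w a b = 0" using F_supp by blast
  moreover have "a \<noteq> Inr b" using \<open>(a, Inr b) \<notin> R\<close> Rrefl a by blast
  ultimately show ?thesis unfolding G_def by simp
qed

lemma G_col: "b \<in> SN \<Longrightarrow> (\<Sum>a\<in>SD. G x w a b) = prob N w b"
proof -
  assume b: "b \<in> SN"
  have "Inr b \<in> SD" using b by (simp add: ds_states)
  then have "(\<Sum>a\<in>SD. (if a = Inr b then colres x w b else 0)) = colres x w b"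
    using fin(1) by (simp add: sum.delta')
  then show ?thesis unfolding G_def colres_def by (simp add: sum.distrib)
qed

lemma K_eq_G: "sum (K (x, w)) (E \<inter> T) = (\<Sum>d\<in>E \<inter> (SD \<times> SN). G x w (fst d) (snd d))"
proof -
  have "sum (K (x, w)) (E \<inter> T) = (\<Sum>d\<in>E \<inter> T. G x w (fst d) (snd d))"
    unfolding K_def by (intro sum.cong) auto
  also have "\<dots> = (\<Sum>d\<in>E \<inter> (SD \<times> SN). G x w (fst d) (snd d))"
  proof (rule sum.mono_neutral_left)
    show "finite (E \<inter> (SD \<times> SN))" using fin by simp
    show "E \<inter> T \<subseteq> E \<inter> (SD \<times> SN)" using T_sub by blast
    show "\<forall>i\<in>E \<inter> (SD \<times> SN) - E \<inter> T. G x w (fst i) (snd i) = 0"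
    proof
      fix i assume "i \<in> E \<inter> (SD \<times> SN) - E \<inter> T"
      then show "G x w (fst i) (snd i) = 0" using G_zero[of "fst i" "snd i"] by (cases i) auto
    qed
  qed
  finally show ?thesis .
qed

lemma K_lump: "b0 \<in> SN \<Longrightarrow> sum (K (x, w)) {d\<in>T. snd d = b0} = prob N w b0"
proof -
  assume b0: "b0 \<in> SN"
  have "{d\<in>T. snd d = b0} = {d. snd d = b0} \<inter> T" by blast
  then have "sum (K (x, w)) {d\<in>T. snd d = b0} = (\<Sum>d\<in>{d. snd d = b0} \<inter> (SD \<times> SN). G x w (fst d) (snd d))"
    using K_eq_G by simp
  also have "{d. snd d = b0} \<inter> (SD \<times> SN) = (\<lambda>a. (a, b0)) ` SD" using b0 by auto
  also have "(\<Sum>d\<in>(\<lambda>a. (a, b0)) ` SD. G x w (fst d) (snd d)) = (\<Sum>a\<in>SD. G x w a b0)"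
    by (subst sum.reindex) (auto simp: inj_on_def)
  also have "\<dots> = prob N w b0" using G_col b0 by blast
  finally show ?thesis .
qed

lemma K_sum: "sum (K (x, w)) T = 1"
proof -
  have "sum (K (x, w)) T = sum (K (x, w)) (UNIV \<inter> T)" by simp
  also have "\<dots> = (\<Sum>d\<in>SD \<times> SN. G x w (fst d) (snd d))" using K_eq_G[of UNIV] by simp
  also have "\<dots> = (\<Sum>a\<in>SD. \<Sum>b\<in>SN. G x w a b)" by (simp add: sum.cartesian_product case_prod_beta')
  also have "\<dots> = (\<Sum>b\<in>SN. \<Sum>a\<in>SD. G x w a b)" by (rule sum.swap)
  also have "\<dots> = (\<Sum>b\<in>SN. prob N w b)" using G_col by simp
  also have "\<dots> = 1" using N_sum[OF wSN] .
  finally show ?thesis .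
qed

lemma K_nn: "0 \<le> K (x, w) d" unfolding K_def using G_nn by simp

end


lemma sum_prod_split: "(\<Sum>d\<in>E \<times> SN. g (fst d) (snd d)) = (\<Sum>a\<in>E. \<Sum>b\<in>SN. g a b)"
  by (simp add: sum.cartesian_product case_prod_beta')

context
  fixes u w assumes uwT: "(Inl u, w) \<in> T"
begin

lemma F_Inr_zero: "F (Inl u) w (Inr v) b = 0"
proof (rule ccontr)
  assume h: "F (Inl u) w (Inr v) b \<noteq> 0"
  then have v: "Inr v \<in> SD" and b: "b \<in> SN" using F_supp[OF uwT] by blast+
  have "F (Inl u) w (Inr v) b \<le> sum (F (Inl u) w (Inr v)) SN"
    using b fin(2) F_nn[OF uwT] by (intro member_le_sum) auto
  also have "\<dots> \<le> prob D (Inl u) (Inr v)" using F_row[OF uwT v] .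
  also have "\<dots> = 0" by simp
  finally show False using h F_nn[OF uwT, of "Inr v" b] by simp
qed

lemma slack: "(\<Sum>a\<in>SD. prob D (Inl u) a - sum (F (Inl u) w a) SN) \<le> \<epsilon>"
proof -
  have "(\<Sum>a\<in>SD. prob D (Inl u) a - sum (F (Inl u) w a) SN) = sum (prob D (Inl u)) SD - (\<Sum>a\<in>SD. sum (F (Inl u) w a) SN)"
    by (simp add: sum_subtractf)
  also have "sum (prob D (Inl u)) SD = 1" using D_sum xSD[OF uwT] by blast
  finally show ?thesis using F_tot[OF uwT] by simp
qed

lemma I1:
  assumes B: "B \<subseteq> SM"
  shows "probset M u B \<le> sum (K (Inl u, w)) {d\<in>T. fst d \<in> Inl ` B} + \<epsilon>"
proof -
  define E :: "('s + 't) set" where "E = Inl ` B"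
  have ESD: "E \<subseteq> SD" using B unfolding E_def by (auto simp: ds_states)
  have fE: "finite E" using finite_subset[OF ESD fin(1)] .
  have "{d\<in>T. fst d \<in> E} = {d. fst d \<in> E} \<inter> T" by blast
  then have "sum (K (Inl u, w)) {d\<in>T. fst d \<in> E} = (\<Sum>d\<in>{d. fst d \<in> E} \<inter> (SD \<times> SN). G (Inl u) w (fst d) (snd d))"
    using K_eq_G[OF uwT] by simp
  also have "{d. fst d \<in> E} \<inter> (SD \<times> SN) = E \<times> SN" using ESD by auto
  also have "(\<Sum>d\<in>E \<times> SN. G (Inl u) w (fst d) (snd d)) = (\<Sum>a\<in>E. \<Sum>b\<in>SN. G (Inl u) w a b)"
    by (rule sum_prod_split)
  also have "\<dots> \<ge> (\<Sum>a\<in>E. sum (F (Inl u) w a) SN)"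
    by (intro sum_mono) (auto simp: G_def colres_nn[OF uwT])
  finally have 1: "(\<Sum>a\<in>E. sum (F (Inl u) w a) SN) \<le> sum (K (Inl u, w)) {d\<in>T. fst d \<in> E}" .
  have 3: "probset M u B = (\<Sum>a\<in>E. prob D (Inl u) a)"
  proof -
    have "probset M u B = sum (prob M u) B" unfolding probset_def using B by (simp add: Int_absorb2)
    also have "\<dots> = (\<Sum>a\<in>E. prob D (Inl u) a)" unfolding E_def by (subst sum.reindex) (auto simp: inj_on_def)
    finally show ?thesis .
  qed
  have 4: "(\<Sum>a\<in>E. prob D (Inl u) a - sum (F (Inl u) w a) SN) \<le> (\<Sum>a\<in>SD. prob D (Inl u) a - sum (F (Inl u) w a) SN)"
    using ESD fin(1) F_row[OF uwT] by (intro sum_mono2) auto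
  have "(\<Sum>a\<in>E. prob D (Inl u) a - sum (F (Inl u) w a) SN) = (\<Sum>a\<in>E. prob D (Inl u) a) - (\<Sum>a\<in>E. sum (F (Inl u) w a) SN)"
    by (simp add: sum_subtractf)
  then show ?thesis using 1 3 4 slack unfolding E_def by linarith
qed

lemma I2:
  assumes A2: "A2 \<subseteq> T"
  shows "sum (K (Inl u, w)) A2 \<le> probset M u {b. \<exists>w'. (Inl b, w') \<in> A2} + \<epsilon>"
proof -
  define Bm where "Bm = {b. \<exists>w'. (Inl b, w') \<in> A2}"
  define P :: "(('s + 't) \<times> 't) set" where "P = Inl ` Bm \<times> SN"
  have A2s: "A2 \<subseteq> SD \<times> SN" using A2 T_sub by blast
  have BmM: "Bm \<subseteq> SM" using A2s unfolding Bm_def by (auto simp: ds_states)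
  have fA2: "finite A2" using finite_subset[OF A2 fT] .
  have fP: "finite P" unfolding P_def using finite_subset[OF BmM fin(3)] fin(2) by simp
  define res :: "('s + 't) \<Rightarrow> 't \<Rightarrow> real" where "res = (\<lambda>a b. if a = Inr b then colres (Inl u) w b else 0)"
  have res_nn: "0 \<le> res a b" for a b unfolding res_def using colres_nn[OF uwT] by simp
  have "sum (K (Inl u, w)) A2 = sum (K (Inl u, w)) (A2 \<inter> T)" using A2 by (simp add: Int_absorb2)
  also have "\<dots> = (\<Sum>d\<in>A2 \<inter> (SD \<times> SN). G (Inl u) w (fst d) (snd d))" by (rule K_eq_G[OF uwT])
  also have "A2 \<inter> (SD \<times> SN) = A2" using A2s by blast
  also have "(\<Sum>d\<in>A2. G (Inl u) w (fst d) (snd d)) = (\<Sum>d\<in>A2. F (Inl u) w (fst d) (snd d)) + (\<Sum>d\<in>A2. res (fst d) (snd d))"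
    unfolding G_def res_def by (simp add: sum.distrib)
  finally have split: "sum (K (Inl u, w)) A2 = (\<Sum>d\<in>A2. F (Inl u) w (fst d) (snd d)) + (\<Sum>d\<in>A2. res (fst d) (snd d))" .
  have r1: "(\<Sum>d\<in>A2. res (fst d) (snd d)) \<le> (\<Sum>d\<in>SD \<times> SN. res (fst d) (snd d))"
    using A2s fin res_nn by (intro sum_mono2) auto
  have r2: "(\<Sum>d\<in>SD \<times> SN. res (fst d) (snd d)) = (\<Sum>b\<in>SN. colres (Inl u) w b)"
  proof -
    have "(\<Sum>d\<in>SD \<times> SN. res (fst d) (snd d)) = (\<Sum>a\<in>SD. \<Sum>b\<in>SN. res a b)" by (rule sum_prod_split)
    also have "\<dots> = (\<Sum>b\<in>SN. \<Sum>a\<in>SD. res a b)" by (rule sum.swap)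
    also have "\<dots> = (\<Sum>b\<in>SN. colres (Inl u) w b)"
    proof (rule sum.cong)
      fix b assume "b \<in> SN"
      then have "Inr b \<in> SD" by (simp add: ds_states)
      then show "(\<Sum>a\<in>SD. res a b) = colres (Inl u) w b" unfolding res_def using fin(1) by (simp add: sum.delta')
    qed simp
    finally show ?thesis .
  qed
  have r3: "(\<Sum>b\<in>SN. colres (Inl u) w b) \<le> \<epsilon>"
  proof -
    have "(\<Sum>b\<in>SN. colres (Inl u) w b) = sum (prob N w) SN - (\<Sum>b\<in>SN. \<Sum>a\<in>SD. F (Inl u) w a b)"
      unfolding colres_def by (simp add: sum_subtractf)
    also have "(\<Sum>b\<in>SN. \<Sum>a\<in>SD. F (Inl u) w a b) = (\<Sum>a\<in>SD. sum (F (Inl u) w a) SN)" by (rule sum.swap)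
    also have "sum (prob N w) SN = 1" using N_sum wSN[OF uwT] by blast
    finally show ?thesis using F_tot[OF uwT] by simp
  qed
  have f1: "(\<Sum>d\<in>A2. F (Inl u) w (fst d) (snd d)) = (\<Sum>d\<in>A2 \<inter> P. F (Inl u) w (fst d) (snd d))"
  proof (rule sum.mono_neutral_right[OF fA2])
    show "A2 \<inter> P \<subseteq> A2" by blast
    show "\<forall>i\<in>A2 - A2 \<inter> P. F (Inl u) w (fst i) (snd i) = 0"
    proof
      fix i assume i: "i \<in> A2 - A2 \<inter> P"
      obtain a b where ab: "i = (a, b)" by (cases i)
      have "a \<in> SD" "b \<in> SN" using i ab A2s by auto
      show "F (Inl u) w (fst i) (snd i) = 0"
      proof (cases a)
        case (Inl b')
        then have "b' \<in> Bm" using i ab unfolding Bm_def by auto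
        then have "i \<in> P" using ab Inl \<open>b \<in> SN\<close> unfolding P_def by auto
        then show ?thesis using i by blast
      next
        case (Inr v)
        then show ?thesis using ab F_Inr_zero by simp
      qed
    qed
  qed
  have f2: "(\<Sum>d\<in>A2 \<inter> P. F (Inl u) w (fst d) (snd d)) \<le> (\<Sum>d\<in>P. F (Inl u) w (fst d) (snd d))"
    using fP F_nn[OF uwT] by (intro sum_mono2) auto
  have f3: "(\<Sum>d\<in>P. F (Inl u) w (fst d) (snd d)) \<le> (\<Sum>a\<in>Inl ` Bm. prob D (Inl u) a)"
  proof -
    have "(\<Sum>d\<in>P. F (Inl u) w (fst d) (snd d)) = (\<Sum>a\<in>Inl ` Bm. sum (F (Inl u) w a) SN)"
      unfolding P_def by (rule sum_prod_split)
    also have "\<dots> \<le> (\<Sum>a\<in>Inl ` Bm. prob D (Inl u) a)"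
      using BmM F_row[OF uwT] by (intro sum_mono) (auto simp: ds_states)
    finally show ?thesis .
  qed
  have f4: "(\<Sum>a\<in>Inl ` Bm. prob D (Inl u) a) = probset M u Bm"
  proof -
    have "(\<Sum>a\<in>Inl ` Bm. prob D (Inl u) a) = sum (prob M u) Bm" by (subst sum.reindex) (auto simp: inj_on_def)
    also have "\<dots> = probset M u Bm" unfolding probset_def using BmM by (simp add: Int_absorb2)
    finally show ?thesis .
  qed
  show ?thesis using split r1 r2 r3 f1 f2 f3 f4 unfolding Bm_def by linarith
qed

end


definition M2 :: "(('s + 't) \<times> 't, 'ap) ctmc" where
  "M2 = \<lparr>states = T, prob = K, rate = (\<lambda>c. rate D (fst c)),
         initial = (Inl (initial M), initial N), label = (\<lambda>c. label D (fst c))\<rparr>"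

definition N2 :: "(('s + 't) \<times> 't, 'ap) ctmc" where
  "N2 = \<lparr>states = T, prob = K, rate = (\<lambda>c. rate N (snd c)),
         initial = (Inl (initial M), initial N), label = (\<lambda>c. label N (snd c))\<rparr>"

lemma M2_simps[simp]: "states M2 = T" "prob M2 = K" "rate M2 c = rate D (fst c)"
  "initial M2 = (Inl (initial M), initial N)" "label M2 c = label D (fst c)"
  by (simp_all add: M2_def)

lemma N2_simps[simp]: "states N2 = T" "prob N2 = K" "rate N2 c = rate N (snd c)"
  "initial N2 = (Inl (initial M), initial N)" "label N2 c = label N (snd c)"
  by (simp_all add: N2_def)

lemma K_nn': "c \<in> T \<Longrightarrow> 0 \<le> K c d"
  by (cases c) (simp add: K_nn)

lemma K_sum': "c \<in> T \<Longrightarrow> sum (K c) T = 1"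
  by (cases c) (simp add: K_sum)

lemma cM2: "is_ctmc M2"
  unfolding is_ctmc_def
proof (intro conjI ballI allI impI)
  show "finite (states M2)" using fT by simp
  show "states M2 \<noteq> {}" using init_T by auto
  show "initial M2 \<in> states M2" using init_T by simp
  fix c assume c: "c \<in> states M2"
  then show "0 \<le> prob M2 c t" for t using K_nn' by simp
  show "prob M2 c t = 0" if "t \<notin> states M2" for t using that by (simp add: K_def)
  show "(\<Sum>t\<in>states M2. prob M2 c t) = 1" using c K_sum' by simp
  have "fst c \<in> SD" using c T_sub by auto
  then show "0 < rate M2 c" using cD unfolding is_ctmc_def by simp
qed

lemma cN2: "is_ctmc N2"
  unfolding is_ctmc_def
proof (intro conjI ballI allI impI)
  show "finite (states N2)" using fT by simp
  show "states N2 \<noteq> {}" using init_T by auto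
  show "initial N2 \<in> states N2" using init_T by simp
  fix c assume c: "c \<in> states N2"
  then show "0 \<le> prob N2 c t" for t using K_nn' by simp
  show "prob N2 c t = 0" if "t \<notin> states N2" for t using that by (simp add: K_def)
  show "(\<Sum>t\<in>states N2. prob N2 c t) = 1" using c K_sum' by simp
  have "snd c \<in> SN" using c T_sub by auto
  then show "0 < rate N2 c" using cN unfolding is_ctmc_def by simp
qed

lemma label_T: "c \<in> T \<Longrightarrow> label D (fst c) = label N (snd c)"
  using Rcond unfolding T_def by auto

lemma rate_T: "c \<in> T \<Longrightarrow> \<bar>ln (rate D (fst c)) - ln (rate N (snd c))\<bar> \<le> \<delta>"
proof -
  assume "c \<in> T"
  then obtain x y where c: "c = (x, y)" "(x, Inr y) \<in> R" unfolding T_def by auto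
  then show ?thesis using Rcond[OF c(2)] by simp
qed

lemma same: "same_graph M2 N2"
  unfolding same_graph_def using label_T by simp

lemma P4: "eps_delta_bisimilar 0 \<delta> (direct_sum M2 N2) (Inl (initial M2)) (Inr (initial N2))"
proof -
  let ?X = "direct_sum M2 N2"
  define L :: "((('s + 't) \<times> 't) + (('s + 't) \<times> 't)) rel" where "L = {(Inl c, Inr c) | c. c \<in> T}"
  have cX: "is_ctmc ?X" using is_ctmc_ds[OF cM2 cN2] .
  have fX: "finite (states ?X)" using cX unfolding is_ctmc_def by blast
  have nnX: "\<And>s t. s \<in> states ?X \<Longrightarrow> 0 \<le> prob ?X s t" using cX unfolding is_ctmc_def by blast
  have fM2: "finite (states M2)" and fN2: "finite (states N2)" using fT by simp_all
  let ?Q = "Id_on (states ?X) \<union> L \<union> L\<inverse>"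
  have d0: "0 \<le> \<delta>" using rate_T init_T by (meson abs_ge_zero order_trans)
  have "eps_delta_bisim 0 \<delta> ?X ?Q"
  proof (rule edb_from_pairs[OF fX nnX order_refl d0])
    show "L \<subseteq> states ?X \<times> states ?X" unfolding L_def by (auto simp: ds_states)
    show "label ?X a = label ?X b" if "(a, b) \<in> L" for a b using that label_T unfolding L_def by auto
    show "\<bar>ln (rate ?X a) - ln (rate ?X b)\<bar> \<le> \<delta>" if "(a, b) \<in> L" for a b using that rate_T unfolding L_def by auto
    show "probset ?X a A \<le> probset ?X b (?Q `` A) + 0" if ab: "(a, b) \<in> L \<union> L\<inverse>" and A: "A \<subseteq> states ?X" for a b A
    proof -
      from ab obtain c where c: "c \<in> T" "(a = Inl c \<and> b = Inr c) \<or> (a = Inr c \<and> b = Inl c)" unfolding L_def by blast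
      then show ?thesis
      proof (elim disjE conjE)
        assume a: "a = Inl c" and b: "b = Inr c"
        have sub: "Inl -` A \<inter> T \<subseteq> Inr -` (?Q `` A) \<inter> T"
        proof
          fix d assume d: "d \<in> Inl -` A \<inter> T"
          then have "(Inl d, Inr d) \<in> L" unfolding L_def by blast
          then show "d \<in> Inr -` (?Q `` A) \<inter> T" using d by blast
        qed
        have "probset ?X a A = probset M2 c (Inl -` A)" unfolding a by (rule probset_ds_Inl[OF fM2 fN2])
        also have "\<dots> \<le> probset N2 c (Inr -` (?Q `` A))"
          unfolding probset_def M2_simps N2_simps using fT K_nn'[OF c(1)] sub by (intro sum_mono2) auto
        also have "\<dots> = probset ?X b (?Q `` A)" unfolding b by (rule probset_ds_Inr[OF fM2 fN2, symmetric])
        finally show ?thesis by simp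
      next
        assume a: "a = Inr c" and b: "b = Inl c"
        have "probset ?X a A = probset N2 c (Inr -` A)" unfolding a by (rule probset_ds_Inr[OF fM2 fN2])
        also have "\<dots> \<le> probset M2 c (Inl -` (?Q `` A))"
          unfolding probset_def M2_simps N2_simps using fT K_nn'[OF c(1)] by (intro sum_mono2) (auto simp: L_def)
        also have "\<dots> = probset ?X b (?Q `` A)" unfolding b by (rule probset_ds_Inl[OF fM2 fN2, symmetric])
        finally show ?thesis by simp
      qed
    qed
  qed
  moreover have "(Inl (initial M2), Inr (initial N2)) \<in> ?Q" using init_T unfolding L_def by auto
  ultimately show ?thesis unfolding eps_delta_bisimilar_def by blast
qed


lemma P3: "eps_delta_bisimilar \<epsilon> 0 (direct_sum M M2) (Inl (initial M)) (Inr (initial M2))"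
proof -
  let ?X = "direct_sum M M2"
  define L :: "('s + ('s + 't) \<times> 't) rel" where "L = {(Inl u, Inr (Inl u, w)) | u w. (Inl u, w) \<in> T}"
  have cX: "is_ctmc ?X" using is_ctmc_ds[OF cM cM2] .
  have fX: "finite (states ?X)" using cX unfolding is_ctmc_def by blast
  have nnX: "\<And>s t. s \<in> states ?X \<Longrightarrow> 0 \<le> prob ?X s t" using cX unfolding is_ctmc_def by blast
  have fM2: "finite (states M2)" using fT by simp
  let ?Q = "Id_on (states ?X) \<union> L \<union> L\<inverse>"
  have uM: "u \<in> SM" if "(Inl u, w) \<in> T" for u w using that T_sub by (auto simp: ds_states)
  have "eps_delta_bisim \<epsilon> 0 ?X ?Q"
  proof (rule edb_from_pairs[OF fX nnX eps order_refl])
    show "L \<subseteq> states ?X \<times> states ?X" unfolding L_def using uM by (auto simp: ds_states)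
    show "label ?X a = label ?X b" if "(a, b) \<in> L" for a b using that unfolding L_def by auto
    show "\<bar>ln (rate ?X a) - ln (rate ?X b)\<bar> \<le> 0" if "(a, b) \<in> L" for a b using that unfolding L_def by auto
    show "probset ?X a A \<le> probset ?X b (?Q `` A) + \<epsilon>" if ab: "(a, b) \<in> L \<union> L\<inverse>" and A: "A \<subseteq> states ?X" for a b A
    proof -
      from ab obtain u w where uw: "(Inl u, w) \<in> T"
        and cases: "(a = Inl u \<and> b = Inr (Inl u, w)) \<or> (a = Inr (Inl u, w) \<and> b = Inl u)" unfolding L_def by blast
      have u: "u \<in> SM" using uM uw by blast
      from cases show ?thesis
      proof (elim disjE conjE)
        assume a: "a = Inl u" and b: "b = Inr (Inl u, w)"
        define B where "B = Inl -` A \<inter> SM"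
        have sub: "{d\<in>T. fst d \<in> Inl ` B} \<subseteq> Inr -` (?Q `` A) \<inter> T"
        proof
          fix d assume d: "d \<in> {d\<in>T. fst d \<in> Inl ` B}"
          then obtain b' w' where bw: "d = (Inl b', w')" "b' \<in> B" "d \<in> T" by (cases d) auto
          then have "(Inl b', Inr d) \<in> L" unfolding L_def by blast
          moreover have "Inl b' \<in> A" using bw B_def by auto
          ultimately show "d \<in> Inr -` (?Q `` A) \<inter> T" using bw by blast
        qed
        have "probset ?X a A = probset M u (Inl -` A)" unfolding a by (rule probset_ds_Inl[OF fin(3) fM2])
        also have "\<dots> = probset M u B" unfolding B_def by (rule probset_cong) auto
        also have "\<dots> \<le> sum (K (Inl u, w)) {d\<in>T. fst d \<in> Inl ` B} + \<epsilon>" using I1[OF uw] B_def by blast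
        also have "sum (K (Inl u, w)) {d\<in>T. fst d \<in> Inl ` B} \<le> probset M2 (Inl u, w) (Inr -` (?Q `` A))"
          unfolding probset_def M2_simps using fT K_nn'[OF uw] sub by (intro sum_mono2) auto
        also have "probset M2 (Inl u, w) (Inr -` (?Q `` A)) = probset ?X b (?Q `` A)"
          unfolding b by (rule probset_ds_Inr[OF fin(3) fM2, symmetric])
        finally show ?thesis by simp
      next
        assume a: "a = Inr (Inl u, w)" and b: "b = Inl u"
        define A2 where "A2 = Inr -` A \<inter> T"
        have sub: "{b. \<exists>w'. (Inl b, w') \<in> A2} \<inter> SM \<subseteq> Inl -` (?Q `` A)"
        proof
          fix b' assume "b' \<in> {b. \<exists>w'. (Inl b, w') \<in> A2} \<inter> SM"
          then obtain w' where w': "(Inl b', w') \<in> A2" by blast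
          then have "(Inl b', Inr (Inl b', w')) \<in> L" unfolding L_def A2_def by blast
          moreover have "Inr (Inl b', w') \<in> A" using w' A2_def by auto
          ultimately show "b' \<in> Inl -` (?Q `` A)" by blast
        qed
        have "probset ?X a A = probset M2 (Inl u, w) (Inr -` A)" unfolding a by (rule probset_ds_Inr[OF fin(3) fM2])
        also have "\<dots> = sum (K (Inl u, w)) A2" unfolding probset_def A2_def by simp
        also have "\<dots> \<le> probset M u {b. \<exists>w'. (Inl b, w') \<in> A2} + \<epsilon>" using I2[OF uw] A2_def by blast
        also have "probset M u {b. \<exists>w'. (Inl b, w') \<in> A2} \<le> probset M u (Inl -` (?Q `` A))"
          using fin(3) M_nn[OF u] sub by (intro probset_mono) auto
        also have "probset M u (Inl -` (?Q `` A)) = probset ?X b (?Q `` A)"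
          unfolding b by (rule probset_ds_Inl[OF fin(3) fM2, symmetric])
        finally show ?thesis by simp
      qed
    qed
  qed
  moreover have "(Inl (initial M), Inr (initial M2)) \<in> ?Q" using init_T unfolding L_def by auto
  ultimately show ?thesis unfolding eps_delta_bisimilar_def by blast
qed

lemma P5: "strong_bisimilar (direct_sum N2 N) (Inl (initial N2)) (Inr (initial N))"
proof -
  let ?X = "direct_sum N2 N"
  let ?S = "states ?X"
  define pi :: "(('s + 't) \<times> 't) + 't \<Rightarrow> 't" where "pi = case_sum snd id"
  define Q where "Q = {(a, b). a \<in> ?S \<and> b \<in> ?S \<and> pi a = pi b}"
  have fN2: "finite (states N2)" using fT by simp
  have piS: "pi a \<in> SN" if "a \<in> ?S" for a using that T_sub unfolding pi_def by (auto simp: ds_states)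
  have labS: "label ?X a = label N (pi a)" if "a \<in> ?S" for a
    using that label_T unfolding pi_def by (auto simp: ds_states)
  have rateS: "rate ?X a = rate N (pi a)" if "a \<in> ?S" for a
    using that unfolding pi_def by (auto simp: ds_states)
  have lump: "probset ?X a {b\<in>?S. pi b = w0} = prob N (pi a) w0" if a: "a \<in> ?S" and w0: "w0 \<in> SN" for a w0
  proof (cases a)
    case (Inl c)
    then have c: "c \<in> T" using a by (auto simp: ds_states)
    obtain x w where xw: "c = (x, w)" by (cases c)
    have "probset ?X a {b\<in>?S. pi b = w0} = probset N2 c (Inl -` {b\<in>?S. pi b = w0})"
      unfolding Inl by (rule probset_ds_Inl[OF fN2 fin(2)])
    also have "\<dots> = sum (K c) {d\<in>T. snd d = w0}"
      unfolding probset_def N2_simps by (rule arg_cong[where f="sum (K c)"]) (auto simp: pi_def ds_states)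
    also have "\<dots> = prob N w w0" using K_lump[of x w w0] c xw w0 by simp
    finally show ?thesis using Inl xw pi_def by simp
  next
    case (Inr v)
    have "probset ?X a {b\<in>?S. pi b = w0} = probset N v (Inr -` {b\<in>?S. pi b = w0})"
      unfolding Inr by (rule probset_ds_Inr[OF fN2 fin(2)])
    also have "\<dots> = sum (prob N v) {w0}"
      unfolding probset_def using w0 by (intro arg_cong[where f="sum (prob N v)"]) (auto simp: pi_def ds_states)
    also have "\<dots> = prob N (pi a) w0" using Inr pi_def by simp
    finally show ?thesis .
  qed
  have "strong_bisim ?X Q" unfolding strong_bisim_def
  proof (intro conjI)
    show eqv: "equiv ?S Q"
      by (rule equivI) (auto simp: Q_def refl_on_def sym_def trans_def)
    have P: "label ?X a = label ?X b \<and> rate ?X a = rate ?X b \<and> (\<forall>C\<in>?S // Q. probset ?X a C = probset ?X b C)"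
      if ab: "(a, b) \<in> Q" for a b
    proof (intro conjI ballI)
      have a: "a \<in> ?S" and b: "b \<in> ?S" and e: "pi a = pi b" using ab unfolding Q_def by auto
      show "label ?X a = label ?X b" using labS a b e by simp
      show "rate ?X a = rate ?X b" using rateS a b e by simp
      fix C assume "C \<in> ?S // Q"
      then obtain z where z: "z \<in> ?S" "C = Q `` {z}" by (rule quotientE) blast
      have C: "C = {b\<in>?S. pi b = pi z}" using z unfolding Q_def by auto
      show "probset ?X a C = probset ?X b C" unfolding C using lump a b e piS z(1) by simp
    qed
    show "\<forall>(a, b)\<in>Q. label ?X a = label ?X b \<and> rate ?X a = rate ?X b \<and> (\<forall>C\<in>?S // Q. probset ?X a C = probset ?X b C)"
      using P by blast
  qed
  moreover have "(Inl (initial N2), Inr (initial N)) \<in> Q"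
    using init_T T_sub unfolding Q_def pi_def by (auto simp: ds_states)
  ultimately show ?thesis unfolding strong_bisimilar_def by blast
qed

end


definition ren :: "('a \<Rightarrow> nat) \<Rightarrow> ('a, 'ap) ctmc \<Rightarrow> (nat, 'ap) ctmc" where
  "ren g X = \<lparr>states = g ` states X,
     prob = (\<lambda>a b. if a \<in> g ` states X \<and> b \<in> g ` states X
                   then prob X (inv_into (states X) g a) (inv_into (states X) g b) else 0),
     rate = (\<lambda>a. rate X (inv_into (states X) g a)),
     initial = g (initial X),
     label = (\<lambda>a. label X (inv_into (states X) g a))\<rparr>"

lemma ren_states[simp]: "states (ren g X) = g ` states X" by (simp add: ren_def)
lemma ren_initial[simp]: "initial (ren g X) = g (initial X)" by (simp add: ren_def)

lemma ren_prob: "inj_on g (states X) \<Longrightarrow> s \<in> states X \<Longrightarrow> t \<in> states X \<Longrightarrow> prob (ren g X) (g s) (g t) = prob X s t"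
  by (simp add: ren_def)
lemma ren_rate: "inj_on g (states X) \<Longrightarrow> s \<in> states X \<Longrightarrow> rate (ren g X) (g s) = rate X s"
  by (simp add: ren_def)
lemma ren_label: "inj_on g (states X) \<Longrightarrow> s \<in> states X \<Longrightarrow> label (ren g X) (g s) = label X s"
  by (simp add: ren_def)

lemma ren_ctmc:
  assumes inj: "inj_on g (states X)" and c: "is_ctmc X"
  shows "is_ctmc (ren g X)"
  unfolding is_ctmc_def
proof (intro conjI ballI allI impI)
  show "finite (states (ren g X))" using c unfolding is_ctmc_def by simp
  show "states (ren g X) \<noteq> {}" using c unfolding is_ctmc_def by simp
  show "initial (ren g X) \<in> states (ren g X)" using c unfolding is_ctmc_def by simp
  fix a assume a: "a \<in> states (ren g X)"
  then obtain s where s: "s \<in> states X" "a = g s" by auto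
  have ia: "inv_into (states X) g a \<in> states X" using s by (auto intro: inv_into_into)
  show "0 \<le> prob (ren g X) a t" for t
    using c ia a unfolding is_ctmc_def by (simp add: ren_def)
  show "prob (ren g X) a t = 0" if "t \<notin> states (ren g X)" for t using that by (simp add: ren_def)
  have "(\<Sum>t\<in>states (ren g X). prob (ren g X) a t) = (\<Sum>t\<in>states X. prob (ren g X) (g s) (g t))"
    using inj s by (simp add: sum.reindex)
  also have "\<dots> = (\<Sum>t\<in>states X. prob X s t)" using ren_prob[OF inj s(1)] by simp
  also have "\<dots> = 1" using c s unfolding is_ctmc_def by blast
  finally show "(\<Sum>t\<in>states (ren g X). prob (ren g X) a t) = 1" .
  show "0 < rate (ren g X) a" using c s ren_rate[OF inj s(1)] unfolding is_ctmc_def by simp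
qed

lemma ds_conds:
  assumes inj1: "inj_on h1 (states X1)" and inj2: "inj_on h2 (states X2)"
    and st1: "states Y1 = h1 ` states X1" and st2: "states Y2 = h2 ` states X2"
    and pr1: "\<And>s t. s \<in> states X1 \<Longrightarrow> t \<in> states X1 \<Longrightarrow> prob Y1 (h1 s) (h1 t) = prob X1 s t"
    and pr2: "\<And>s t. s \<in> states X2 \<Longrightarrow> t \<in> states X2 \<Longrightarrow> prob Y2 (h2 s) (h2 t) = prob X2 s t"
    and ra1: "\<And>s. s \<in> states X1 \<Longrightarrow> rate Y1 (h1 s) = rate X1 s"
    and ra2: "\<And>s. s \<in> states X2 \<Longrightarrow> rate Y2 (h2 s) = rate X2 s"
    and la1: "\<And>s. s \<in> states X1 \<Longrightarrow> label Y1 (h1 s) = label X1 s"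
    and la2: "\<And>s. s \<in> states X2 \<Longrightarrow> label Y2 (h2 s) = label X2 s"
  shows "inj_on (map_sum h1 h2) (states (direct_sum X1 X2))"
    and "states (direct_sum Y1 Y2) = map_sum h1 h2 ` states (direct_sum X1 X2)"
    and "\<And>s t. s \<in> states (direct_sum X1 X2) \<Longrightarrow> t \<in> states (direct_sum X1 X2) \<Longrightarrow>
           prob (direct_sum Y1 Y2) (map_sum h1 h2 s) (map_sum h1 h2 t) = prob (direct_sum X1 X2) s t"
    and "\<And>s. s \<in> states (direct_sum X1 X2) \<Longrightarrow> rate (direct_sum Y1 Y2) (map_sum h1 h2 s) = rate (direct_sum X1 X2) s"
    and "\<And>s. s \<in> states (direct_sum X1 X2) \<Longrightarrow> label (direct_sum Y1 Y2) (map_sum h1 h2 s) = label (direct_sum X1 X2) s"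
proof -
  show "inj_on (map_sum h1 h2) (states (direct_sum X1 X2))"
    unfolding inj_on_def ds_states
  proof (intro ballI impI)
    fix x y assume x: "x \<in> Inl ` states X1 \<union> Inr ` states X2" and y: "y \<in> Inl ` states X1 \<union> Inr ` states X2"
      and e: "map_sum h1 h2 x = map_sum h1 h2 y"
    show "x = y"
    proof (cases x)
      case (Inl a)
      then have a: "a \<in> states X1" using x by auto
      then show ?thesis
      proof (cases y)
        case (Inl b)
        then have "b \<in> states X1" using y by auto
        then show ?thesis using a e \<open>x = Inl a\<close> Inl inj1 unfolding inj_on_def by simp
      next
        case (Inr b) then show ?thesis using e \<open>x = Inl a\<close> by simp
      qed
    next
      case (Inr a)
      then have a: "a \<in> states X2" using x by auto
      then show ?thesis
      proof (cases y)
        case (Inr b)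
        then have "b \<in> states X2" using y by auto
        then show ?thesis using a e \<open>x = Inr a\<close> Inr inj2 unfolding inj_on_def by simp
      next
        case (Inl b) then show ?thesis using e \<open>x = Inr a\<close> by simp
      qed
    qed
  qed
  show "states (direct_sum Y1 Y2) = map_sum h1 h2 ` states (direct_sum X1 X2)"
    unfolding ds_states st1 st2 image_Un image_image by simp
  fix s assume s: "s \<in> states (direct_sum X1 X2)"
  show "rate (direct_sum Y1 Y2) (map_sum h1 h2 s) = rate (direct_sum X1 X2) s"
    using s ra1 ra2 by (cases s) (auto simp: ds_states)
  show "label (direct_sum Y1 Y2) (map_sum h1 h2 s) = label (direct_sum X1 X2) s"
    using s la1 la2 by (cases s) (auto simp: ds_states)
  fix t assume t: "t \<in> states (direct_sum X1 X2)"
  show "prob (direct_sum Y1 Y2) (map_sum h1 h2 s) (map_sum h1 h2 t) = prob (direct_sum X1 X2) s t"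
    using s t pr1 pr2 by (cases s; cases t) (auto simp: ds_states)
qed

theorem theorem3:
  fixes \<epsilon> \<delta> :: real
    and M :: "('s, 'ap) ctmc" and N :: "('t, 'ap) ctmc"
  assumes "\<epsilon> \<ge> 0" and "\<delta> \<ge> 0"
    and "is_ctmc M" and "is_ctmc N"
    and "ctmc_eps_delta_bisimilar \<epsilon> \<delta> M N"
  shows "\<exists>M' N' :: (nat, 'ap) ctmc.
           is_ctmc M' \<and> is_ctmc N' \<and> same_graph M' N' \<and>
           ctmc_eps_delta_bisimilar \<epsilon> 0 M M' \<and>
           ctmc_eps_delta_bisimilar 0 \<delta> M' N' \<and>
           ctmc_strong_bisimilar N' N"
proof -
  obtain R where Rb: "eps_delta_bisim \<epsilon> \<delta> (direct_sum M N) R"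
    and init: "(Inl (initial M), Inr (initial N)) \<in> R"
    using assms(5) unfolding ctmc_eps_delta_bisimilar_def eps_delta_bisimilar_def by blast
  interpret C: constr M N R \<epsilon> \<delta>
    using assms(1,3,4) Rb init by unfold_locales
  obtain g :: "(('s + 't) \<times> 't) \<Rightarrow> nat" and n where "g ` C.T = {i. i < n}" and inj: "inj_on g C.T"
    using finite_imp_inj_to_nat_seg[OF C.fT] by blast
  define M' where "M' = ren g C.M2"
  define N' where "N' = ren g C.N2"
  have injM: "inj_on g (states C.M2)" and injN: "inj_on g (states C.N2)" using inj by simp_all
  have cM': "is_ctmc M'" unfolding M'_def using ren_ctmc[OF injM C.cM2] .
  have cN': "is_ctmc N'" unfolding N'_def using ren_ctmc[OF injN C.cN2] .
  have sg: "same_graph M' N'"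
    unfolding same_graph_def M'_def N'_def
  proof (intro conjI ballI)
    show "states (ren g C.M2) = states (ren g C.N2)" by simp
    show "initial (ren g C.M2) = initial (ren g C.N2)" by simp
    fix a assume "a \<in> states (ren g C.M2)"
    then obtain c where c: "c \<in> C.T" "a = g c" by auto
    show "label (ren g C.M2) a = label (ren g C.N2) a"
      using c ren_label[OF injM, of c] ren_label[OF injN, of c] C.label_T[OF c(1)] by simp
    fix b assume "b \<in> states (ren g C.M2)"
    then obtain d where d: "d \<in> C.T" "b = g d" by auto
    show "(0 < prob (ren g C.M2) a b) = (0 < prob (ren g C.N2) a b)"
      using c d ren_prob[OF injM, of c d] ren_prob[OF injN, of c d] by simp
  qed
  have idc: "inj_on id (states X)" "states X = id ` states X"
    "\<And>s t. prob X (id s) (id t) = prob X s t" "\<And>s. rate X (id s) = rate X s" "\<And>s. label X (id s) = label X s"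
    for X :: "('q, 'ap) ctmc" by simp_all
  have b3: "ctmc_eps_delta_bisimilar \<epsilon> 0 M M'"
  proof -
    note cc = ds_conds[of id M g C.M2 M M', OF idc(1) injM idc(2)]
    have st: "states M' = g ` states C.M2" unfolding M'_def by simp
    have pr: "\<And>s t. s \<in> states C.M2 \<Longrightarrow> t \<in> states C.M2 \<Longrightarrow> prob M' (g s) (g t) = prob C.M2 s t"
      unfolding M'_def using ren_prob[OF injM] by blast
    have ra: "\<And>s. s \<in> states C.M2 \<Longrightarrow> rate M' (g s) = rate C.M2 s" unfolding M'_def using ren_rate[OF injM] by blast
    have la: "\<And>s. s \<in> states C.M2 \<Longrightarrow> label M' (g s) = label C.M2 s" unfolding M'_def using ren_label[OF injM] by blast
    note cc2 = cc[OF st _ pr _ ra _ la]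
    have "eps_delta_bisimilar \<epsilon> 0 (direct_sum M M') (map_sum id g (Inl (initial M))) (map_sum id g (Inr (initial C.M2)))"
      by (rule edb_transfer[OF cc2(1) cc2(2) cc2(3) cc2(4) cc2(5) C.P3]) simp_all
    then show ?thesis unfolding ctmc_eps_delta_bisimilar_def M'_def by simp
  qed
  have b4: "ctmc_eps_delta_bisimilar 0 \<delta> M' N'"
  proof -
    have stM: "states M' = g ` states C.M2" unfolding M'_def by simp
    have prM: "\<And>s t. s \<in> states C.M2 \<Longrightarrow> t \<in> states C.M2 \<Longrightarrow> prob M' (g s) (g t) = prob C.M2 s t"
      unfolding M'_def using ren_prob[OF injM] by blast
    have raM: "\<And>s. s \<in> states C.M2 \<Longrightarrow> rate M' (g s) = rate C.M2 s" unfolding M'_def using ren_rate[OF injM] by blast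
    have laM: "\<And>s. s \<in> states C.M2 \<Longrightarrow> label M' (g s) = label C.M2 s" unfolding M'_def using ren_label[OF injM] by blast
    have stN: "states N' = g ` states C.N2" unfolding N'_def by simp
    have prN: "\<And>s t. s \<in> states C.N2 \<Longrightarrow> t \<in> states C.N2 \<Longrightarrow> prob N' (g s) (g t) = prob C.N2 s t"
      unfolding N'_def using ren_prob[OF injN] by blast
    have raN: "\<And>s. s \<in> states C.N2 \<Longrightarrow> rate N' (g s) = rate C.N2 s" unfolding N'_def using ren_rate[OF injN] by blast
    have laN: "\<And>s. s \<in> states C.N2 \<Longrightarrow> label N' (g s) = label C.N2 s" unfolding N'_def using ren_label[OF injN] by blast
    note cc2 = ds_conds[OF injM injN stM stN prM prN raM raN laM laN]
    have "eps_delta_bisimilar 0 \<delta> (direct_sum M' N') (map_sum g g (Inl (initial C.M2))) (map_sum g g (Inr (initial C.N2)))"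
      by (rule edb_transfer[OF cc2(1) cc2(2) cc2(3) cc2(4) cc2(5) C.P4]) simp_all
    then show ?thesis unfolding ctmc_eps_delta_bisimilar_def M'_def N'_def by simp
  qed
  have b5: "ctmc_strong_bisimilar N' N"
  proof -
    have stN: "states N' = g ` states C.N2" unfolding N'_def by simp
    have prN: "\<And>s t. s \<in> states C.N2 \<Longrightarrow> t \<in> states C.N2 \<Longrightarrow> prob N' (g s) (g t) = prob C.N2 s t"
      unfolding N'_def using ren_prob[OF injN] by blast
    have raN: "\<And>s. s \<in> states C.N2 \<Longrightarrow> rate N' (g s) = rate C.N2 s" unfolding N'_def using ren_rate[OF injN] by blast
    have laN: "\<And>s. s \<in> states C.N2 \<Longrightarrow> label N' (g s) = label C.N2 s" unfolding N'_def using ren_label[OF injN] by blast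
    note cc = ds_conds[of g C.N2 id N N' N, OF injN idc(1) stN idc(2)]
    note cc2 = cc[OF prN _ raN _ laN]
    have "strong_bisimilar (direct_sum N' N) (map_sum g id (Inl (initial C.N2))) (map_sum g id (Inr (initial N)))"
      by (rule strong_transfer[OF cc2(1) cc2(2) cc2(3) cc2(4) cc2(5) C.P5]) simp_all
    then show ?thesis unfolding ctmc_strong_bisimilar_def N'_def by simp
  qed
  show ?thesis using cM' cN' sg b3 b4 b5 by blast
qed


end
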